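(* In $M_q(\mathfrak{g})$, for all $1\le i,j\le m$: $$\Delta(\Gamma^j)=\chi_j\otimes\Gamma^j+\Gamma^j\otimes1,\qquad(\chi_i\cdot\Gamma^j)\cdot\chi_i^{-1}=\mathfrak{q}^{c_{ji}}q^{-c_{ji}}\Gamma^j.$$
   Context: Notation and setting. $\mathbb{k}$ is an algebraically closed field of characteristic $0$. $(a_{ij})$ is an $m\times m$ Cartan matrix of finite type, and $d_i\in\{1,2,3\}$ are such that $c_{ij}=d_ia_{ij}$ is symmetric. $n\ge2$, $q$ is a primitive $n^2$-th root of unity in $\mathbb{k}$, $\mathfrak{q}=q^n$, and $l_i=\mathrm{ord}(q^{c_{ii}})$. $\lfloor\cdot\rfloor$ is the floor function, and $a\in(\mathbb{Z}_n)^m$ has entries in $\{0,\dots,n-1\}$. $A_q(\mathfrak{g})$ is the half small quasi-quantum group of Etingof–Gelaki (defined with the symmetrized matrix $(c_{ij})$). It is the subalgebra generated by $h_i=g_i^n$ and $e_i$ of the Hopf algebra $H$ generated by commuting grouplikes $g_i$ with $g_i^{n^2}=1$ and elements $e_i$ with $g_ie_jg_i^{-1}=q^{\delta_{ij}}e_j$, $e_i^{l_i}=0$, the quantum Serre relations, and $\Delta(e_i)=e_i\otimes\prod_jg_j^{c_{ij}}+1\otimes e_i$; the quasi-Hopf structure is inherited from a twist of $H$. Let $1_a$ ($a\in(\mathbb{Z}_n)^m$) be the idempotents of $\mathbb{k}\langle h_i\rangle$ with $1_ah_i=\mathfrak{q}^{a_i}1_a$, $1^i_k=\frac1n\sum_j\mathfrak{q}^{-kj}h_i^j$,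 $b_i=\sum_a\prod_jq^{-c_{ij}a_j}1_a$, and $H_i=\prod_jh_j^{c_{ij}}$. The quasi-Hopf structure of $A_q(\mathfrak{g})$ has: - $\Delta(h_i)=h_i\otimes h_i$; - $\Delta(e_i)=e_i\otimes b_i^{-1}+1\otimes\sum_{j=1}^{n-1}1^i_je_i+H_i^{-1}\otimes1^i_0e_i$; - reassociator $\phi=\sum_{a,b,c}\prod_{i,j}\mathfrak{q}^{-c_{ij}a_i\lfloor\frac{b_j+c_j}{n}\rfloor}1_a\otimes1_b\otimes1_c$. $M_q(\mathfrak{g})$ is the dual Majid (dual quasi-Hopf) algebra $A_q(\mathfrak{g})^*$: - its coalgebra structure is dual to the algebra structure of $A_q(\mathfrak{g})$; - its product is $(f\cdot g)(x)=\sum f(x_{(1)})g(x_{(2)})$, and its unit is $1=\varepsilon$; - its reassociator is the functional $\Phi(f\otimes g\otimes h)=(f\otimes g\otimes h)(\phi)$. Fix a basis of $A_q(\mathfrak{g})$ of homogeneous elements (grading $\deg h_i=0$, $\deg e_i=1$) containing all $1_a$ and all $1_ae_i$, and let $x^*$ denote dual basis elements. Set $\chi_i=(1_{\epsilon_i})^*$, which is the algebra character with $\chi_i(h_j)=\mathfrak{q}^{\delta_{ij}}$ and $\chi_i(e_j)=0$; set $\Gamma^i=(1_{\epsilon_i}e_i)^*$. *)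

theory Defs
  imports Main "HOL-Computational_Algebra.Polynomial"
begin

definition alg_closed :: "'k::field itself \<Rightarrow> bool" where
  "alg_closed _ \<longleftrightarrow> (\<forall>p::'k poly. degree p > 0 \<longrightarrow> (\<exists>x. poly p x = 0))"

definition primitive_root :: "nat \<Rightarrow> 'k::field \<Rightarrow> bool" where
  "primitive_root N x \<longleftrightarrow> x ^ N = 1 \<and> (\<forall>k. 0 < k \<and> k < N \<longrightarrow> x ^ k \<noteq> 1)"

definition ord_k :: "'k::field \<Rightarrow> nat" where
  "ord_k x = (LEAST k. 0 < k \<and> x ^ k = 1)"

definition cartan_finite_type :: "nat \<Rightarrow> (nat \<Rightarrow> nat \<Rightarrow> int) \<Rightarrow> (nat \<Rightarrow> int) \<Rightarrow> bool" where
  "cartan_finite_type m a d \<longleftrightarrow>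
     (\<forall>i<m. a i i = 2) \<and>
     (\<forall>i<m. \<forall>j<m. i \<noteq> j \<longrightarrow> a i j \<le> 0) \<and>
     (\<forall>i<m. \<forall>j<m. a i j = 0 \<longleftrightarrow> a j i = 0) \<and>
     (\<forall>i<m. d i \<in> {1,2,3}) \<and>
     (\<forall>i<m. \<forall>j<m. d i * a i j = d j * a j i) \<and>
     (\<forall>x::nat \<Rightarrow> real. (\<exists>i<m. x i \<noteq> 0) \<longrightarrow>
        (\<Sum>i<m. \<Sum>j<m. of_int (d i * a i j) * x i * x j) > 0)"

section \<open>Index set (Z_n)^m with representatives in {0..n-1}\<close>

definition idx :: "nat \<Rightarrow> nat \<Rightarrow> (nat \<Rightarrow> nat) set" where
  "idx m n = {a. (\<forall>j<m. a j < n) \<and> (\<forall>j\<ge>m. a j = 0)}"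

text \<open>The unit vector epsilon_i and the representative of -epsilon_i in {0..n-1}^m.\<close>
definition unitv :: "nat \<Rightarrow> nat \<Rightarrow> nat" where
  "unitv i = (\<lambda>j. if j = i then 1 else 0)"

definition neg_unitv :: "nat \<Rightarrow> nat \<Rightarrow> nat \<Rightarrow> nat" where
  "neg_unitv n i = (\<lambda>j. if j = i then n - 1 else 0)"

definition kalgebra :: "('k::field \<Rightarrow> 'a::ring_1 \<Rightarrow> 'a) \<Rightarrow> bool" where
  "kalgebra scale \<longleftrightarrow> vector_space scale \<and>
     (\<forall>c x y. scale c (x * y) = scale c x * y) \<and>
     (\<forall>c x y. scale c (x * y) = x * scale c y)"

definition one_ik :: "('k::field \<Rightarrow> 'a::ring_1 \<Rightarrow> 'a) \<Rightarrow> nat \<Rightarrow> 'k \<Rightarrow> (nat \<Rightarrow> 'a) \<Rightarrow> nat \<Rightarrow> nat \<Rightarrow> 'a" where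
  "one_ik scale n q h i k =
     scale (1 / of_nat n) (\<Sum>t<n. scale ((q ^ n) powi (- (int k * int t))) (h i ^ t))"

definition one_a :: "('k::field \<Rightarrow> 'a::ring_1 \<Rightarrow> 'a) \<Rightarrow> nat \<Rightarrow> nat \<Rightarrow> 'k \<Rightarrow> (nat \<Rightarrow> 'a) \<Rightarrow> (nat \<Rightarrow> nat) \<Rightarrow> 'a" where
  "one_a scale m n q h a = prod_list (map (\<lambda>i. one_ik scale n q h i (a i)) [0..<m])"

text \<open>b_i^{-1} = sum_a prod_j q^(c_ij a_j) 1_a  (inverse of b_i = sum_a prod_j q^(-c_ij a_j) 1_a).\<close>
definition b_inv :: "('k::field \<Rightarrow> 'a::ring_1 \<Rightarrow> 'a) \<Rightarrow> nat \<Rightarrow> nat \<Rightarrow> 'k \<Rightarrow> (nat \<Rightarrow> nat \<Rightarrow> int) \<Rightarrow> (nat \<Rightarrow> 'a) \<Rightarrow> nat \<Rightarrow> 'a" where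
  "b_inv scale m n q c h i =
     (\<Sum>a\<in>idx m n. scale (\<Prod>j<m. q powi (c i j * int (a j))) (one_a scale m n q h a))"

text \<open>H_i^{-1} = prod_j h_j^(-c_ij), computed using h_j^n = 1.\<close>
definition H_inv :: "nat \<Rightarrow> nat \<Rightarrow> (nat \<Rightarrow> nat \<Rightarrow> int) \<Rightarrow> (nat \<Rightarrow> 'a::ring_1) \<Rightarrow> nat \<Rightarrow> 'a" where
  "H_inv m n c h i = prod_list (map (\<lambda>j. h j ^ nat ((- c i j) mod int n)) [0..<m])"

definition graded :: "('k::field \<Rightarrow> 'a::ring_1 \<Rightarrow> 'a) \<Rightarrow> (nat \<Rightarrow> 'a set) \<Rightarrow> bool" where
  "graded scale G \<longleftrightarrow>
     (\<forall>d. module.subspace scale (G d)) \<and>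
     (\<forall>d d' x y. x \<in> G d \<longrightarrow> y \<in> G d' \<longrightarrow> x * y \<in> G (d + d')) \<and>
     module.span scale (\<Union>d. G d) = UNIV \<and>
     (\<forall>N x. (\<forall>d<N. x d \<in> G d) \<longrightarrow> (\<Sum>d<N. x d) = 0 \<longrightarrow> (\<forall>d<N. x d = 0))"

inductive_set gen_alg :: "('k::field \<Rightarrow> 'a::ring_1 \<Rightarrow> 'a) \<Rightarrow> nat \<Rightarrow> (nat \<Rightarrow> 'a) \<Rightarrow> (nat \<Rightarrow> 'a) \<Rightarrow> 'a set"
  for scale m h e where
    "1 \<in> gen_alg scale m h e"
  | "i < m \<Longrightarrow> h i \<in> gen_alg scale m h e"
  | "i < m \<Longrightarrow> e i \<in> gen_alg scale m h e"
  | "x \<in> gen_alg scale m h e \<Longrightarrow> y \<in> gen_alg scale m h e \<Longrightarrow> x + y \<in> gen_alg scale m h e"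
  | "x \<in> gen_alg scale m h e \<Longrightarrow> y \<in> gen_alg scale m h e \<Longrightarrow> x * y \<in> gen_alg scale m h e"
  | "x \<in> gen_alg scale m h e \<Longrightarrow> scale c x \<in> gen_alg scale m h e"

definition lin_fun :: "('k::field \<Rightarrow> 'a::ring_1 \<Rightarrow> 'a) \<Rightarrow> ('a \<Rightarrow> 'k) \<Rightarrow> bool" where
  "lin_fun scale f \<longleftrightarrow> Vector_Spaces.linear scale ((*) :: 'k \<Rightarrow> 'k \<Rightarrow> 'k) f"

text \<open>An element of A (x) A is represented by a list of pairs (sum of pure tensors);
  two representatives denote the same tensor iff they pair equally with all f (x) g.\<close>
definition pair_tensor :: "('a \<Rightarrow> 'k::field) \<Rightarrow> ('a \<Rightarrow> 'k) \<Rightarrow> ('a \<times> 'a) list \<Rightarrow> 'k" where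
  "pair_tensor f g xs = sum_list (map (\<lambda>(u, v). f u * g v) xs)"

definition teq :: "('k::field \<Rightarrow> 'a::ring_1 \<Rightarrow> 'a) \<Rightarrow> ('a \<times> 'a) list \<Rightarrow> ('a \<times> 'a) list \<Rightarrow> bool" where
  "teq scale xs ys \<longleftrightarrow> (\<forall>f g. lin_fun scale f \<longrightarrow> lin_fun scale g \<longrightarrow>
      pair_tensor f g xs = pair_tensor f g ys)"

definition tmult :: "('a::ring_1 \<times> 'a) list \<Rightarrow> ('a \<times> 'a) list \<Rightarrow> ('a \<times> 'a) list" where
  "tmult xs ys = concat (map (\<lambda>(u, v). map (\<lambda>(u', v'). (u * u', v * v')) ys) xs)"

definition Aq_coproduct ::
  "('k::field \<Rightarrow> 'a::ring_1 \<Rightarrow> 'a) \<Rightarrow> nat \<Rightarrow> nat \<Rightarrow> 'k \<Rightarrow> (nat \<Rightarrow> nat \<Rightarrow> int) \<Rightarrow>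
   (nat \<Rightarrow> 'a) \<Rightarrow> (nat \<Rightarrow> 'a) \<Rightarrow> ('a \<Rightarrow> ('a \<times> 'a) list) \<Rightarrow> bool" where
  "Aq_coproduct scale m n q c h e Dl \<longleftrightarrow>
     (\<forall>x y. teq scale (Dl (x + y)) (Dl x @ Dl y)) \<and>
     (\<forall>k x. teq scale (Dl (scale k x)) (map (\<lambda>(u, v). (scale k u, v)) (Dl x))) \<and>
     (\<forall>x y. teq scale (Dl (x * y)) (tmult (Dl x) (Dl y))) \<and>
     teq scale (Dl 1) [(1, 1)] \<and>
     (\<forall>i<m. teq scale (Dl (h i)) [(h i, h i)]) \<and>
     (\<forall>i<m. teq scale (Dl (e i))
        [(e i, b_inv scale m n q c h i),
         (1, (\<Sum>t\<in>{1..n-1}. one_ik scale n q h i t) * e i),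
         (H_inv m n c h i, one_ik scale n q h i 0 * e i)])"

section \<open>The dual algebra M_q(g) = A_q(g)^*\<close>

text \<open>Product of M: (f . g)(x) = sum f(x_(1)) g(x_(2)).\<close>
definition conv :: "('a \<Rightarrow> ('a \<times> 'a) list) \<Rightarrow> ('a \<Rightarrow> 'k::field) \<Rightarrow> ('a \<Rightarrow> 'k) \<Rightarrow> 'a \<Rightarrow> 'k" where
  "conv Dl f g x = pair_tensor f g (Dl x)"

text \<open>Coproduct of M, dual to the multiplication of A, as an element of (A (x) A)^* = M (x) M.\<close>
definition dual_coprod :: "('a::ring_1 \<Rightarrow> 'k) \<Rightarrow> 'a \<times> 'a \<Rightarrow> 'k" where
  "dual_coprod f = (\<lambda>(x, y). f (x * y))"

text \<open>Pure tensor f (x) g of M (x) M, viewed as the functional x (x) y |-> f x * g y.\<close>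
definition ftensor :: "('a \<Rightarrow> 'k::field) \<Rightarrow> ('a \<Rightarrow> 'k) \<Rightarrow> 'a \<times> 'a \<Rightarrow> 'k" where
  "ftensor f g = (\<lambda>(x, y). f x * g y)"

definition dual_basis :: "('k::field \<Rightarrow> 'a::ring_1 \<Rightarrow> 'a) \<Rightarrow> 'a set \<Rightarrow> 'a \<Rightarrow> 'a \<Rightarrow> 'k" where
  "dual_basis scale B b = (\<lambda>v. module.representation scale B v b)"

end

theory Submission
  imports Defs
begin


locale RU =
  fixes n :: nat and q :: "'k::field_char_0"
  assumes n2: "n \<ge> 2" and q_prim: "primitive_root (n ^ 2) q"
begin

abbreviation "qq \<equiv> q ^ n"

lemma qq_n: "qq ^ n = 1"
  using q_prim by (simp add: primitive_root_def power2_eq_square flip: power_mult)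

lemma q_nz: "q \<noteq> 0"
proof
  assume "q = 0"
  moreover have "n ^ 2 \<noteq> 0" using n2 by simp
  ultimately have "q ^ (n ^ 2) = 0" by simp
  moreover have "q ^ (n ^ 2) = 1" using q_prim by (simp add: primitive_root_def)
  ultimately show False by simp
qed

lemma qq_nz: "qq \<noteq> 0" using q_nz by (simp add: q_nz)

lemma qq_pow_ne1: "0 < r \<Longrightarrow> r < n \<Longrightarrow> qq ^ r \<noteq> 1"
proof -
  assume r: "0 < r" "r < n"
  have "0 < n * r" "n * r < n ^ 2" using r by (auto simp: power2_eq_square)
  then have "q ^ (n * r) \<noteq> 1" using q_prim by (simp add: primitive_root_def)
  then show ?thesis by (simp add: power_mult)
qed

lemma qq_powi_mod: "qq powi w = qq ^ nat (w mod int n)"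
proof -
  have "w = w mod int n + int n * (w div int n)" by simp
  then have "qq powi w = qq powi (w mod int n + int n * (w div int n))" by simp
  also have "\<dots> = qq powi (w mod int n) * qq powi (int n * (w div int n))"
    by (rule power_int_add) (simp add: q_nz)
  also have "qq powi (int n * (w div int n)) = 1"
    by (simp add: power_int_mult qq_n)
  also have "qq powi (w mod int n) = qq ^ nat (w mod int n)"
    using n2 by (simp add: power_int_nonneg_exp)
  finally show ?thesis by simp
qed

lemma qq_powi_eq1: "qq powi w = 1 \<longleftrightarrow> int n dvd w"
proof -
  have lt: "nat (w mod int n) < n" using n2 by (simp add: nat_less_iff)
  show ?thesis
  proof
    assume "qq powi w = 1"
    then have "qq ^ nat (w mod int n) = 1" by (simp add: qq_powi_mod)
    then have "\<not> 0 < nat (w mod int n)" using qq_pow_ne1[OF _ lt] by blast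
    then have "nat (w mod int n) = 0" by simp
    moreover have "w mod int n \<ge> 0" using n2 by simp
    ultimately have "w mod int n = 0" by linarith
    then show "int n dvd w" by (simp add: dvd_eq_mod_eq_0)
  next
    assume "int n dvd w" then show "qq powi w = 1" by (simp add: qq_powi_mod)
  qed
qed

lemma qq_powi_inj: "qq powi x = qq powi y \<longleftrightarrow> int n dvd (x - y)"
proof -
  have "qq powi (x - y) = qq powi x / qq powi y"
    by (rule power_int_diff) (simp add: q_nz)
  moreover have "qq powi y \<noteq> 0" using qq_nz by simp
  ultimately have "qq powi x = qq powi y \<longleftrightarrow> qq powi (x - y) = 1" by (auto simp: field_simps)
  then show ?thesis by (simp add: qq_powi_eq1)
qed

lemma qq_pow_inj: "a < n \<Longrightarrow> b < n \<Longrightarrow> qq ^ a = qq ^ b \<longleftrightarrow> a = b"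
proof -
  assume ab: "a < n" "b < n"
  have "qq ^ a = qq ^ b \<longleftrightarrow> qq powi int a = qq powi int b" by simp
  also have "\<dots> \<longleftrightarrow> int n dvd (int a - int b)" by (rule qq_powi_inj)
  also have "\<dots> \<longleftrightarrow> int a mod int n = int b mod int n" by (simp add: mod_eq_dvd_iff)
  also have "\<dots> \<longleftrightarrow> a = b" using ab by simp
  finally show ?thesis .
qed

lemma geom: "(\<Sum>s<n. (qq powi w) ^ s) = (if int n dvd w then of_nat n else 0)"
proof (cases "int n dvd w")
  case True
  then show ?thesis by (simp add: qq_powi_eq1[symmetric])
next
  case False
  then have ne: "qq powi w \<noteq> 1" by (simp add: qq_powi_eq1)
  have "(qq powi w) ^ n = 1"
    by (metis mult.commute power_int_mult power_int_of_nat power_int_power' qq_n power_int_1_left)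
  then show ?thesis using False by (simp add: geometric_sum[OF ne])
qed

end


locale LQ = RU n q for n :: nat and q :: "'k::field_char_0" +
  fixes scale :: "'k \<Rightarrow> 'a::ring_1 \<Rightarrow> 'a" and m :: nat and c :: "nat \<Rightarrow> nat \<Rightarrow> int"
    and h e :: "nat \<Rightarrow> 'a" and G :: "nat \<Rightarrow> 'a set" and B :: "'a set"
    and Dl :: "'a \<Rightarrow> ('a \<times> 'a) list" and eps :: "'a \<Rightarrow> 'k"
  assumes m_pos: "0 < m"
    and kalg: "kalgebra scale"
    and gen: "\<forall>x. x \<in> gen_alg scale m h e"
    and h_comm: "\<forall>i<m. \<forall>j<m. h i * h j = h j * h i"
    and h_pow: "\<forall>i<m. h i ^ n = 1"
    and h_e: "\<forall>i<m. \<forall>j<m. h i * e j = scale (if i = j then qq else 1) (e j * h i)"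
    and grading: "graded scale G"
    and h_deg: "\<forall>i<m. h i \<in> G 0"
    and e_deg: "\<forall>i<m. e i \<in> G 1"
    and B_indep: "\<not> module.dependent scale B"
    and B_span: "module.span scale B = UNIV"
    and B_hom: "\<forall>b\<in>B. \<exists>k. b \<in> G k"
    and B_ones: "\<forall>x\<in>idx m n. one_a scale m n q h x \<in> B"
    and B_ones_e: "\<forall>x\<in>idx m n. \<forall>i<m. one_a scale m n q h x * e i \<in> B"
    and coprod: "Aq_coproduct scale m n q c h e Dl"
    and eps_lin: "lin_fun scale eps"
    and eps_mult: "\<forall>x y. eps (x * y) = eps x * eps y"
    and eps_one: "eps 1 = 1"
    and eps_h: "\<forall>i<m. eps (h i) = 1"
    and eps_e: "\<forall>i<m. eps (e i) = 0"

sublocale LQ \<subseteq> V: vector_space scale using kalg by (simp add: kalgebra_def)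

context LQ begin

lemma scale_ml: "scale k x * y = scale k (x * y)" using kalg by (simp add: kalgebra_def)
lemma scale_mr: "x * scale k y = scale k (x * y)" using kalg unfolding kalgebra_def by metis

lemma kvs: "vector_space ((*) :: 'k \<Rightarrow> 'k \<Rightarrow> 'k)"
  by unfold_locales (auto simp: algebra_simps)

lemma lin_funI: "(\<And>x y. f (x + y) = f x + f y) \<Longrightarrow> (\<And>k x. f (scale k x) = k * f x) \<Longrightarrow> lin_fun scale f"
  unfolding lin_fun_def Vector_Spaces.linear_iff using V.vector_space_axioms kvs by auto

lemma lin_fun_add: "lin_fun scale f \<Longrightarrow> f (x + y) = f x + f y"
  unfolding lin_fun_def Vector_Spaces.linear_iff by auto
lemma lin_fun_scale: "lin_fun scale f \<Longrightarrow> f (scale k x) = k * f x"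
  unfolding lin_fun_def Vector_Spaces.linear_iff by auto
lemma lin_fun_zero: "lin_fun scale f \<Longrightarrow> f 0 = 0"
  using lin_fun_scale[of f 0 0] by simp
lemma lin_fun_sum: "lin_fun scale f \<Longrightarrow> f (\<Sum>i\<in>I. g i) = (\<Sum>i\<in>I. f (g i))"
  by (induction I rule: infinite_finite_induct) (auto simp: lin_fun_zero lin_fun_add)
lemma lin_fun_diff: "lin_fun scale f \<Longrightarrow> f (x - y) = f x - f y"
  using lin_fun_add[of f "x - y" y] by simp

abbreviation rep :: "'a \<Rightarrow> 'a \<Rightarrow> 'k" where "rep x b \<equiv> V.representation B x b"

lemma indep: "V.independent B" using B_indep by simp
lemma inspan: "x \<in> V.span B" using B_span by simp

lemma rep_add: "rep (x + y) b = rep x b + rep y b"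
  using V.representation_add[OF indep inspan inspan] by simp
lemma rep_scale: "rep (scale k x) b = k * rep x b"
  using V.representation_scale[OF indep inspan] by simp
lemma lin_rep: "lin_fun scale (\<lambda>x. rep x b)"
  by (rule lin_funI) (simp_all add: rep_add rep_scale)
lemma rep_zero: "rep 0 b = 0" using lin_fun_zero[OF lin_rep] .
lemma rep_sum: "rep (\<Sum>i\<in>I. g i) b = (\<Sum>i\<in>I. rep (g i) b)" using lin_fun_sum[OF lin_rep] .
lemma rep_diff: "rep (x - y) b = rep x b - rep y b" using lin_fun_diff[OF lin_rep] .
lemma rep_basis: "b \<in> B \<Longrightarrow> rep b b' = (if b' = b then 1 else 0)"
  using V.representation_basis[OF indep] by simp
lemma rep_ne: "rep x b \<noteq> 0 \<Longrightarrow> b \<in> B" using V.representation_ne_zero by blast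
lemma rep_eq0: "(\<And>b. b \<in> B \<Longrightarrow> rep x b = 0) \<Longrightarrow> x = 0"
proof -
  assume H: "\<And>b. b \<in> B \<Longrightarrow> rep x b = 0"
  have "{b. rep x b \<noteq> 0} = {}" using H rep_ne by blast
  then show "x = 0" using V.sum_nonzero_representation_eq[OF indep inspan, of x] by simp
qed
lemma rep_inj: "(\<And>b. b \<in> B \<Longrightarrow> rep x b = rep y b) \<Longrightarrow> x = y"
  using rep_eq0[of "x - y"] by (simp add: rep_diff)

lemma zero_notin_B: "0 \<notin> B" using V.dependent_zero indep by blast

lemma lin_eq_B: "lin_fun scale f \<Longrightarrow> lin_fun scale g \<Longrightarrow> (\<And>b. b \<in> B \<Longrightarrow> f b = g b) \<Longrightarrow> f = g"
proof
  fix x assume f: "lin_fun scale f" and g: "lin_fun scale g" and eq: "\<And>b. b \<in> B \<Longrightarrow> f b = g b"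
  define S where "S = {b. rep x b \<noteq> 0}"
  have xe: "(\<Sum>b\<in>S. scale (rep x b) b) = x"
    using V.sum_nonzero_representation_eq[OF indep inspan, of x] by (simp add: S_def)
  have SB: "S \<subseteq> B" using rep_ne S_def by blast
  have "f (\<Sum>b\<in>S. scale (rep x b) b) = (\<Sum>b\<in>S. rep x b * f b)"
    by (simp add: lin_fun_sum[OF f] lin_fun_scale[OF f])
  also have "\<dots> = (\<Sum>b\<in>S. rep x b * g b)" using SB eq by (auto intro!: sum.cong)
  also have "\<dots> = g (\<Sum>b\<in>S. scale (rep x b) b)"
    by (simp add: lin_fun_sum[OF g] lin_fun_scale[OF g])
  finally show "f x = g x" using xe by simp
qed

lemma Gsub: "V.subspace (G d)" using grading by (simp add: graded_def)
lemma G_mult: "x \<in> G d \<Longrightarrow> y \<in> G d' \<Longrightarrow> x * y \<in> G (d + d')"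
  using grading by (simp add: graded_def)
lemma G_unique: "(\<And>d. d < N \<Longrightarrow> x d \<in> G d) \<Longrightarrow> (\<Sum>d<N. x d) = 0 \<Longrightarrow> d < N \<Longrightarrow> x d = 0"
  using grading unfolding graded_def by blast
lemma G_zero: "0 \<in> G d" using V.subspace_0[OF Gsub] .
lemma G_add: "x \<in> G d \<Longrightarrow> y \<in> G d \<Longrightarrow> x + y \<in> G d" using V.subspace_add[OF Gsub] .
lemma G_scale: "x \<in> G d \<Longrightarrow> scale k x \<in> G d" using V.subspace_scale[OF Gsub] .
lemma G_diff: "x \<in> G d \<Longrightarrow> y \<in> G d \<Longrightarrow> x - y \<in> G d" using V.subspace_diff[OF Gsub] .
lemma G_sum: "(\<And>i. i \<in> I \<Longrightarrow> g i \<in> G d) \<Longrightarrow> (\<Sum>i\<in>I. g i) \<in> G d" using V.subspace_sum[OF Gsub] .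

lemma deg_unique:
  assumes "b \<in> G k" "b \<in> G k'" "k \<noteq> k'" shows "b = 0"
proof -
  define x where "x t = (if t = k then b else 0) + (if t = k' then - b else 0)" for t
  define N where "N = Suc (max k k')"
  have "\<And>t. t < N \<Longrightarrow> x t \<in> G t"
    using assms by (auto simp: x_def G_zero V.subspace_neg[OF Gsub])
  moreover have "(\<Sum>t<N. x t) = 0"
    by (simp add: x_def sum.distrib N_def less_Suc_eq_le)
  ultimately have "x k = 0" using G_unique[of N x k] by (simp add: N_def)
  then show ?thesis using assms by (simp add: x_def)
qed

lemma lemL:
  assumes x: "x \<in> G d" and b0: "b0 \<in> B" "b0 \<in> G k" and kd: "k \<noteq> d"
  shows "rep x b0 = 0"
proof (rule ccontr)
  assume nz: "rep x b0 \<noteq> 0"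
  define F where "F = {b. rep x b \<noteq> 0}"
  have finF: "finite F" unfolding F_def by (rule V.finite_representation)
  have FB: "F \<subseteq> B" unfolding F_def using rep_ne by blast
  define deg where "deg b = (SOME t. b \<in> G t)" for b
  have degG: "b \<in> B \<Longrightarrow> b \<in> G (deg b)" for b
    unfolding deg_def using B_hom by (meson someI_ex)
  have xeq: "(\<Sum>b\<in>F. scale (rep x b) b) = x"
    unfolding F_def using V.sum_nonzero_representation_eq[OF indep inspan, of x] by simp
  define N where "N = Suc (Max (insert k (insert d (deg ` F))))"
  have kN: "k < N" and dN: "d < N" and degN: "\<And>b. b \<in> F \<Longrightarrow> deg b < N"
  proof -
    have fin: "finite (insert k (insert d (deg ` F)))" using finF by simp
    show "k < N" "d < N" unfolding N_def using Max_ge[OF fin] by (auto simp: less_Suc_eq_le)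
    show "\<And>b. b \<in> F \<Longrightarrow> deg b < N" unfolding N_def using Max_ge[OF fin] by (auto simp: less_Suc_eq_le)
  qed
  define f where "f t = (\<Sum>b\<in>{b\<in>F. deg b = t}. scale (rep x b) b) - (if t = d then x else 0)" for t
  have fG: "f t \<in> G t" for t
    unfolding f_def using x FB degG
    by (intro G_diff G_sum) (auto intro!: G_scale simp: G_zero)
  have "(\<Sum>t<N. f t) = (\<Sum>t<N. \<Sum>b\<in>{b\<in>F. deg b = t}. scale (rep x b) b) - (\<Sum>t<N. if t = d then x else 0)"
    by (simp add: f_def sum_subtractf)
  also have "(\<Sum>t<N. \<Sum>b\<in>{b\<in>F. deg b = t}. scale (rep x b) b) = (\<Sum>b\<in>F. scale (rep x b) b)"
    by (rule sum.group) (use finF degN in auto)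
  also have "(\<Sum>t<N. if t = d then x else 0) = x" using dN by simp
  finally have "(\<Sum>t<N. f t) = 0" using xeq by simp
  then have "f k = 0" using G_unique[of N f k] fG kN by blast
  then have S: "(\<Sum>b\<in>{b\<in>F. deg b = k}. scale (rep x b) b) = 0" using kd by (simp add: f_def)
  have "b0 \<in> F" using nz by (simp add: F_def)
  have "deg b0 = k"
  proof (rule ccontr)
    assume "deg b0 \<noteq> k"
    then have "b0 = 0" using deg_unique[OF degG[OF b0(1)] b0(2)] by simp
    then show False using b0 zero_notin_B by simp
  qed
  have "rep x b0 = 0"
    by (rule V.independentD[OF indep _ _ S]) (use finF FB \<open>b0 \<in> F\<close> \<open>deg b0 = k\<close> in auto)
  then show False using nz by simp
qed

end


context LQ begin

abbreviation one :: "nat \<Rightarrow> nat \<Rightarrow> 'a" where "one k t \<equiv> one_ik scale n q h k t"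
abbreviation Oa :: "(nat \<Rightarrow> nat) \<Rightarrow> 'a" where "Oa a \<equiv> one_a scale m n q h a"
definition Pl :: "nat \<Rightarrow> (nat \<Rightarrow> nat) \<Rightarrow> 'a" where
  "Pl l a = prod_list (map (\<lambda>i. one i (a i)) [0..<l])"

lemma O_Pl: "Oa a = Pl m a" by (simp add: one_a_def Pl_def)

lemma n_pos: "0 < n" using n2 by simp
lemma n_nz: "(of_nat n :: 'k) \<noteq> 0" using n2 by simp

lemma one_G0: "1 \<in> G 0"
proof -
  have "h 0 ^ s \<in> G 0" if "s \<ge> 1" for s
    using that
  proof (induction s)
    case (Suc s)
    then show ?case
      using m_pos h_deg G_mult[of "h 0" 0 "h 0 ^ s" 0]
      by (cases "s = 0") auto
  qed simp
  then have "h 0 ^ n \<in> G 0" using n2 by simp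
  then show ?thesis using h_pow m_pos by simp
qed

lemma hpow_G0: "i < m \<Longrightarrow> h i ^ s \<in> G 0"
proof (induction s)
  case 0 then show ?case by (simp add: one_G0)
next
  case (Suc s) then show ?case using G_mult[of "h i" 0 "h i ^ s" 0] h_deg by simp
qed

lemma oneik_G0: "k < m \<Longrightarrow> one k t \<in> G 0"
  unfolding one_ik_def by (intro G_scale G_sum) (auto simp: hpow_G0)

lemma Pl_G0: "l \<le> m \<Longrightarrow> Pl l a \<in> G 0"
proof (induction l)
  case 0 then show ?case by (simp add: Pl_def one_G0)
next
  case (Suc l)
  then show ?case using G_mult[of "Pl l a" 0 "one l (a l)" 0] oneik_G0[of l "a l"]
    by (simp add: Pl_def)
qed

lemma O_G0: "Oa a \<in> G 0" using Pl_G0[of m a] by (simp add: O_Pl)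

lemma hpow_eig: "h k * v = scale lam v \<Longrightarrow> h k ^ s * v = scale (lam ^ s) v"
  by (induction s) (auto simp: mult.assoc scale_mr)

lemma hpow_eigr: "v * h k = scale lam v \<Longrightarrow> v * h k ^ s = scale (lam ^ s) v"
  by (induction s) (auto simp: power_Suc2 mult.assoc[symmetric] scale_ml mult.commute)

lemma coef_id: "qq powi (- (int t * int s)) * (qq powi w) ^ s = (qq powi (w - int t)) ^ s"
proof -
  have "(qq powi (w - int t)) ^ s = qq powi (w * int s + (- (int t * int s)))"
    by (simp add: power_int_power' algebra_simps)
  also have "\<dots> = qq powi (w * int s) * qq powi (- (int t * int s))"
    by (rule power_int_add) (simp add: q_nz)
  finally show ?thesis by (simp add: power_int_power')
qed

lemma geom1: "(1 / of_nat n) * (\<Sum>s<n. (qq powi w) ^ s) = (if int n dvd w then 1 else 0)"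
  using n_nz by (simp add: geom)

lemma one_eig:
  assumes "h k * v = scale (qq powi w) v"
  shows "one k t * v = scale (if int n dvd (w - int t) then 1 else 0) v"
proof -
  have "one k t * v = scale (1 / of_nat n) (\<Sum>s<n. scale (qq powi (- (int t * int s))) (h k ^ s * v))"
    by (simp add: one_ik_def scale_ml sum_distrib_right)
  also have "\<dots> = scale (1 / of_nat n) (\<Sum>s<n. scale ((qq powi (w - int t)) ^ s) v)"
    using hpow_eig[OF assms] by (simp add: coef_id)
  also have "\<dots> = scale ((1 / of_nat n) * (\<Sum>s<n. (qq powi (w - int t)) ^ s)) v"
    by (simp only: V.scale_scale[symmetric] V.scale_sum_left)
  finally show ?thesis by (simp only: geom1)
qed

lemma one_eigr:
  assumes "v * h k = scale (qq powi w) v"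
  shows "v * one k t = scale (if int n dvd (w - int t) then 1 else 0) v"
proof -
  have "v * one k t = scale (1 / of_nat n) (\<Sum>s<n. scale (qq powi (- (int t * int s))) (v * h k ^ s))"
    by (simp add: one_ik_def scale_mr sum_distrib_left)
  also have "\<dots> = scale (1 / of_nat n) (\<Sum>s<n. scale ((qq powi (w - int t)) ^ s) v)"
    using hpow_eigr[OF assms] by (simp add: coef_id)
  also have "\<dots> = scale ((1 / of_nat n) * (\<Sum>s<n. (qq powi (w - int t)) ^ s)) v"
    by (simp only: V.scale_scale[symmetric] V.scale_sum_left)
  finally show ?thesis by (simp only: geom1)
qed

lemma prod_eig:
  assumes "\<And>k. k < m \<Longrightarrow> h k * v = scale (qq powi W k) v" "set L \<subseteq> {..<m}"
  shows "prod_list (map (\<lambda>i. one i (a i)) L) * v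
      = scale (if \<forall>k\<in>set L. int n dvd (W k - int (a k)) then 1 else 0) v"
  using assms(2)
proof (induction L)
  case (Cons i L)
  then have "prod_list (map (\<lambda>i. one i (a i)) (i # L)) * v
     = scale (if \<forall>k\<in>set L. int n dvd (W k - int (a k)) then 1 else 0) (one i (a i) * v)"
    by (simp add: mult.assoc scale_mr)
  also have "one i (a i) * v = scale (if int n dvd (W i - int (a i)) then 1 else 0) v"
    using Cons.prems assms(1) by (intro one_eig) auto
  finally show ?case by simp
qed simp

lemma prod_eigr:
  assumes "\<And>k. k < m \<Longrightarrow> v * h k = scale (qq powi W k) v" "set L \<subseteq> {..<m}"
  shows "v * prod_list (map (\<lambda>i. one i (a i)) L)
      = scale (if \<forall>k\<in>set L. int n dvd (W k - int (a k)) then 1 else 0) v"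
  using assms(2)
proof (induction L rule: rev_induct)
  case (snoc i L)
  have "v * prod_list (map (\<lambda>i. one i (a i)) (L @ [i]))
     = (v * prod_list (map (\<lambda>i. one i (a i)) L)) * one i (a i)"
    by (simp add: mult.assoc)
  also have "\<dots> = scale (if \<forall>k\<in>set L. int n dvd (W k - int (a k)) then 1 else 0) (v * one i (a i))"
    using snoc by (simp add: scale_ml)
  also have "v * one i (a i) = scale (if int n dvd (W i - int (a i)) then 1 else 0) v"
    using snoc.prems assms(1) by (intro one_eigr) auto
  finally show ?case by simp
qed simp

lemma O_eig:
  assumes "\<And>k. k < m \<Longrightarrow> h k * v = scale (qq powi W k) v"
  shows "Oa a * v = scale (if \<forall>k<m. int n dvd (W k - int (a k)) then 1 else 0) v"
  using prod_eig[OF assms, of "[0..<m]" a] unfolding one_a_def by (simp add: atLeast0LessThan Ball_def)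

lemma O_eigr:
  assumes "\<And>k. k < m \<Longrightarrow> v * h k = scale (qq powi W k) v"
  shows "v * Oa a = scale (if \<forall>k<m. int n dvd (W k - int (a k)) then 1 else 0) v"
  using prod_eigr[OF assms, of "[0..<m]" a] unfolding one_a_def by (simp add: atLeast0LessThan Ball_def)

lemma h_hpow_comm: "k < m \<Longrightarrow> i < m \<Longrightarrow> h k * h i ^ s = h i ^ s * h k"
proof (induction s)
  case (Suc s)
  assume km: "k < m" "i < m"
  have "h k * h i ^ Suc s = (h k * h i) * h i ^ s" by (simp add: mult.assoc)
  also have "\<dots> = h i * (h k * h i ^ s)" using h_comm km by (simp add: mult.assoc)
  also have "\<dots> = h i ^ Suc s * h k" using Suc km by (simp add: mult.assoc)
  finally show ?case .
qed simp

lemma h_one_comm: "k < m \<Longrightarrow> i < m \<Longrightarrow> h k * one i t = one i t * h k"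
proof -
  assume km: "k < m" "i < m"
  have "h k * one i t = scale (1 / of_nat n) (\<Sum>s<n. scale (qq powi (- (int t * int s))) (h k * h i ^ s))"
    by (simp add: one_ik_def scale_mr sum_distrib_left)
  also have "\<dots> = scale (1 / of_nat n) (\<Sum>s<n. scale (qq powi (- (int t * int s))) (h i ^ s * h k))"
    using h_hpow_comm[OF km] by simp
  also have "\<dots> = one i t * h k"
    by (simp add: one_ik_def scale_ml sum_distrib_right)
  finally show ?thesis .
qed

lemma h_one_eig: "k < m \<Longrightarrow> h k * one k t = scale (qq ^ t) (one k t)"
proof -
  assume k: "k < m"
  define f where "f s = scale (qq powi (- (int t * int s))) (h k ^ s)" for s
  have per: "f n = f 0"
  proof -
    have "qq powi (- (int t * int n)) = 1"
      by (simp add: qq_powi_eq1)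
    then show ?thesis using h_pow k by (simp add: f_def)
  qed
  have hf: "h k * f s = scale (qq ^ t) (f (Suc s))" for s
  proof -
    have "qq ^ t * qq powi (- (int t * int (Suc s))) = qq powi (int t + (- (int t * int (Suc s))))"
      by (subst power_int_add) (auto simp: q_nz)
    also have "int t + (- (int t * int (Suc s))) = - (int t * int s)" by (simp add: algebra_simps)
    finally show ?thesis by (simp add: f_def scale_mr)
  qed
  have "(\<Sum>s<n. f (Suc s)) = (\<Sum>s<n. f s)"
  proof -
    have "(\<Sum>s<Suc n. f s) = f 0 + (\<Sum>s<n. f (Suc s))" by (rule sum.lessThan_Suc_shift)
    moreover have "(\<Sum>s<Suc n. f s) = (\<Sum>s<n. f s) + f n" by simp
    ultimately show ?thesis using per by (simp add: add.commute)
  qed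
  note sf = this
  have o: "one k t = scale (1 / of_nat n) (\<Sum>s<n. f s)" by (simp add: one_ik_def f_def)
  have "h k * one k t = scale (1 / of_nat n) (\<Sum>s<n. h k * f s)"
    by (simp add: o scale_mr sum_distrib_left)
  also have "\<dots> = scale (1 / of_nat n) (scale (qq ^ t) (\<Sum>s<n. f (Suc s)))"
    by (simp add: hf V.scale_sum_right)
  also have "\<dots> = scale (qq ^ t) (one k t)"
    by (simp add: sf o V.scale_left_commute[of "qq ^ t"])
  finally show ?thesis .
qed

lemma h_Pl_comm: "k < m \<Longrightarrow> l \<le> m \<Longrightarrow> h k * Pl l a = Pl l a * h k"
proof (induction l)
  case (Suc l)
  then show ?case by (simp add: Pl_def mult.assoc[symmetric]) (simp add: mult.assoc h_one_comm)
qed (simp add: Pl_def)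

lemma h_Pl_eig: "k < l \<Longrightarrow> l \<le> m \<Longrightarrow> h k * Pl l a = scale (qq ^ a k) (Pl l a)"
proof (induction l)
  case 0 then show ?case by simp
next
  case (Suc l)
  have e: "Pl (Suc l) a = Pl l a * one l (a l)" by (simp add: Pl_def)
  show ?case
  proof (cases "k = l")
    case True
    have "h k * Pl (Suc l) a = Pl l a * (h k * one k (a k))"
      using Suc.prems h_Pl_comm[of k l a] True e by (simp add: mult.assoc[symmetric])
    then show ?thesis using h_one_eig[of k "a k"] Suc.prems True e by (simp add: scale_mr)
  next
    case False
    then have "k < l" using Suc.prems by simp
    then show ?thesis using Suc e by (simp add: mult.assoc[symmetric] scale_ml)
  qed
qed

lemma h_O_eig: "k < m \<Longrightarrow> h k * Oa a = scale (qq powi int (a k)) (Oa a)"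
  using h_Pl_eig[of k m a] by (simp add: O_Pl)
lemma O_h_eig: "k < m \<Longrightarrow> Oa a * h k = scale (qq powi int (a k)) (Oa a)"
  using h_Pl_eig[of k m a] h_Pl_comm[of k m a] by (simp add: O_Pl)

lemma sum_one: "k < m \<Longrightarrow> (\<Sum>t<n. one k t) = 1"
proof -
  assume k: "k < m"
  have "(\<Sum>t<n. one k t) = scale (1 / of_nat n) (\<Sum>t<n. \<Sum>s<n. scale (qq powi (- (int t * int s))) (h k ^ s))"
    by (simp add: one_ik_def V.scale_sum_right)
  also have "(\<Sum>t<n. \<Sum>s<n. scale (qq powi (- (int t * int s))) (h k ^ s))
      = (\<Sum>s<n. \<Sum>t<n. scale (qq powi (- (int t * int s))) (h k ^ s))"
    by (rule sum.swap)
  also have "\<dots> = (\<Sum>s<n. scale (\<Sum>t<n. (qq powi (- int s)) ^ t) (h k ^ s))"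
    by (simp add: V.scale_sum_left power_int_power' mult.commute)
  also have "(\<Sum>s<n. scale (\<Sum>t<n. (qq powi (- int s)) ^ t) (h k ^ s)) = (\<Sum>s<n. if s = 0 then scale (of_nat n) 1 else 0)"
  proof (rule sum.cong)
    fix s assume "s \<in> {..<n}"
    then have "int n dvd - int s \<longleftrightarrow> s = 0"
    proof -
      assume sn: "s \<in> {..<n}"
      have "int n dvd - int s \<longleftrightarrow> n dvd s" by (simp add: dvd_minus_iff)
      also have "\<dots> \<longleftrightarrow> s = 0" using sn by (auto dest: dvd_imp_le)
      finally show ?thesis .
    qed
    then show "scale (\<Sum>t<n. (qq powi (- int s)) ^ t) (h k ^ s) = (if s = 0 then scale (of_nat n) 1 else 0)"
      by (simp add: geom)
  qed simp
  also have "\<dots> = scale (of_nat n) 1" using n_pos by simp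
  finally show ?thesis using n_nz by simp
qed

lemma idx_Suc: "idx (Suc l) n = (\<lambda>(a, t). a(l := t)) ` (idx l n \<times> {..<n})"
proof
  show "idx (Suc l) n \<subseteq> (\<lambda>(a, t). a(l := t)) ` (idx l n \<times> {..<n})"
  proof
    fix a assume a: "a \<in> idx (Suc l) n"
    then have "a = (\<lambda>(a, t). a(l := t)) (a(l := 0), a l)" by simp
    moreover have "(a(l := 0), a l) \<in> idx l n \<times> {..<n}" using a by (auto simp: idx_def)
    ultimately show "a \<in> (\<lambda>(a, t). a(l := t)) ` (idx l n \<times> {..<n})" by blast
  qed
qed (auto simp: idx_def)

lemma idx_inj: "inj_on (\<lambda>(a, t). a(l := t)) (idx l n \<times> {..<n})"
proof (rule inj_onI)
  fix x y assume x: "x \<in> idx l n \<times> {..<n}" and y: "y \<in> idx l n \<times> {..<n}"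
    and eq: "(\<lambda>(a, t). a(l := t)) x = (\<lambda>(a, t). a(l := t)) y"
  obtain a t where xa: "x = (a, t)" by (cases x)
  obtain b u where yb: "y = (b, u)" by (cases y)
  have e: "a(l := t) = b(l := u)" using eq xa yb by simp
  have "t = u" using fun_cong[OF e, of l] by simp
  moreover have "a = b"
  proof
    fix j show "a j = b j"
      using fun_cong[OF e, of j] x y xa yb by (cases "j = l") (auto simp: idx_def)
  qed
  ultimately show "x = y" using xa yb by simp
qed

lemma idx_0': "idx 0 n = {\<lambda>_. 0}" by (auto simp: idx_def)

lemma idx_finite: "finite (idx l n)"
  by (induction l) (auto simp: idx_Suc idx_0')



lemma Pl_upd: "Pl l (a(l := t)) = Pl l a"
  unfolding Pl_def by (rule arg_cong[where f=prod_list], rule map_cong) auto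

lemma sum_Pl: "l \<le> m \<Longrightarrow> (\<Sum>a\<in>idx l n. Pl l a) = 1"
proof (induction l)
  case 0 then show ?case by (simp add: idx_0' Pl_def)
next
  case (Suc l)
  have "(\<Sum>a\<in>idx (Suc l) n. Pl (Suc l) a) = (\<Sum>(a, t)\<in>idx l n \<times> {..<n}. Pl (Suc l) (a(l := t)))"
    unfolding idx_Suc by (subst sum.reindex[OF idx_inj]) (simp add: comp_def case_prod_beta)
  also have "\<dots> = (\<Sum>(a, t)\<in>idx l n \<times> {..<n}. Pl l a * one l t)"
  proof (rule sum.cong)
    fix x assume "x \<in> idx l n \<times> {..<n}"
    obtain a t where x: "x = (a, t)" by (cases x)
    have "Pl (Suc l) (a(l := t)) = Pl l (a(l := t)) * one l t" by (simp add: Pl_def)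
    then show "(case x of (a, t) \<Rightarrow> Pl (Suc l) (a(l := t))) = (case x of (a, t) \<Rightarrow> Pl l a * one l t)"
      using x by (simp add: Pl_upd)
  qed simp
  also have "\<dots> = (\<Sum>a\<in>idx l n. Pl l a * (\<Sum>t<n. one l t))"
    by (simp add: sum.cartesian_product[symmetric] sum_distrib_left)
  also have "\<dots> = 1" using Suc sum_one[of l] by simp
  finally show ?case .
qed

lemma sum_O: "(\<Sum>a\<in>idx m n. Oa a) = 1"
  using sum_Pl[of m] by (simp add: O_Pl)

end


context LQ begin

definition dl :: "nat \<Rightarrow> nat \<Rightarrow> int" where "dl k i = (if k = i then 1 else 0)"

lemma e_h: "k < m \<Longrightarrow> i < m \<Longrightarrow> e i * h k = scale (qq powi (- dl k i)) (h k * e i)"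
proof -
  assume km: "k < m" "i < m"
  have "h k * e i = scale (qq powi dl k i) (e i * h k)"
    using h_e km by (simp add: dl_def)
  moreover have "qq powi (- dl k i) * qq powi dl k i = 1"
    using q_nz by (simp add: power_int_minus)
  ultimately show ?thesis by simp
qed

lemma Oe_left: "k < m \<Longrightarrow> h k * (Oa a * e i) = scale (qq powi int (a k)) (Oa a * e i)"
  by (simp add: mult.assoc[symmetric] h_O_eig scale_ml)

lemma Oe_right: "k < m \<Longrightarrow> i < m \<Longrightarrow>
   (Oa a * e i) * h k = scale (qq powi (int (a k) - dl k i)) (Oa a * e i)"
proof -
  assume km: "k < m" "i < m"
  have "(Oa a * e i) * h k = scale (qq powi (- dl k i)) ((Oa a * h k) * e i)"
    by (simp add: mult.assoc e_h km scale_mr)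
  also have "\<dots> = scale (qq powi (- dl k i) * qq powi int (a k)) (Oa a * e i)"
    by (simp add: O_h_eig km scale_ml)
  also have "qq powi (- dl k i) * qq powi int (a k) = qq powi (int (a k) - dl k i)"
    by (subst power_int_add[symmetric]) (auto simp: q_nz)
  finally show ?thesis .
qed

lemma idx_eq: "a \<in> idx m n \<Longrightarrow> b \<in> idx m n \<Longrightarrow>
   (\<forall>k<m. int n dvd (int (b k) - int (a k))) \<longleftrightarrow> a = b"
proof
  assume ab: "a \<in> idx m n" "b \<in> idx m n" and d: "\<forall>k<m. int n dvd (int (b k) - int (a k))"
  show "a = b"
  proof
    fix k show "a k = b k"
    proof (cases "k < m")
      case True
      then have "int (b k) mod int n = int (a k) mod int n" using d by (simp add: mod_eq_dvd_iff)
      then show ?thesis using ab True by (simp add: idx_def)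
    next
      case False then show ?thesis using ab by (simp add: idx_def)
    qed
  qed
qed simp

lemma OO: "a \<in> idx m n \<Longrightarrow> b \<in> idx m n \<Longrightarrow> Oa a * Oa b = (if a = b then Oa b else 0)"
proof -
  assume ab: "a \<in> idx m n" "b \<in> idx m n"
  have "Oa a * Oa b = scale (if \<forall>k<m. int n dvd (int (b k) - int (a k)) then 1 else 0) (Oa b)"
    by (rule O_eig) (simp add: h_O_eig)
  then show ?thesis using idx_eq[OF ab] by simp
qed

lemma OOe: "a \<in> idx m n \<Longrightarrow> b \<in> idx m n \<Longrightarrow> Oa a * (Oa b * e i) = (if a = b then Oa b * e i else 0)"
  by (simp add: mult.assoc[symmetric] OO)

lemma OeO: "i < m \<Longrightarrow> (Oa a * e i) * Oa b =
   scale (if \<forall>k<m. int n dvd (int (a k) - dl k i - int (b k)) then 1 else 0) (Oa a * e i)"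
  by (rule O_eigr) (simp add: Oe_right)

lemma O_ne: "a \<in> idx m n \<Longrightarrow> Oa a \<noteq> 0" using B_ones zero_notin_B by force
lemma Oe_ne: "a \<in> idx m n \<Longrightarrow> i < m \<Longrightarrow> Oa a * e i \<noteq> 0" using B_ones_e zero_notin_B by force

lemma O_inj: "a \<in> idx m n \<Longrightarrow> b \<in> idx m n \<Longrightarrow> Oa a = Oa b \<longleftrightarrow> a = b"
proof
  assume ab: "a \<in> idx m n" "b \<in> idx m n" "Oa a = Oa b"
  show "a = b"
  proof (rule ccontr)
    assume "a \<noteq> b"
    then have 1: "Oa a * Oa b = 0" using OO[OF ab(1,2)] by simp
    have 2: "Oa a * Oa a = Oa a" using OO[OF ab(1) ab(1)] by simp
    from 1 2 ab(3) have "Oa b = 0" by simp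
    then show False using O_ne[OF ab(2)] by simp
  qed
qed simp

lemma Oe_inj: "a \<in> idx m n \<Longrightarrow> b \<in> idx m n \<Longrightarrow> i < m \<Longrightarrow> j < m \<Longrightarrow>
   Oa a * e i = Oa b * e j \<longleftrightarrow> a = b \<and> i = j"
proof
  assume ab: "a \<in> idx m n" "b \<in> idx m n" "i < m" "j < m" and eq: "Oa a * e i = Oa b * e j"
  have "a = b"
  proof (rule ccontr)
    assume "a \<noteq> b"
    then have "Oa a * (Oa b * e j) = 0" using OOe ab by simp
    moreover have "Oa a * (Oa a * e i) = Oa a * e i" using OOe ab by simp
    ultimately show False using ab Oe_ne eq by simp
  qed
  moreover have "i = j"
  proof (rule ccontr)
    assume ij: "i \<noteq> j"
    have r1: "(Oa b * e j) * h i = scale (qq powi (int (a i) - dl i i)) (Oa b * e j)"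
      using Oe_right[of i i a] ab eq by simp
    have r2: "(Oa b * e j) * h i = scale (qq powi (int (b i) - dl i j)) (Oa b * e j)"
      using Oe_right[of i j b] ab by simp
    have "qq powi (int (a i) - dl i i) = qq powi (int (b i) - dl i j)"
      using r1 r2 Oe_ne[OF ab(2) ab(4)] by simp
    then have "qq powi (int (a i) - 1) = qq powi (int (a i))"
      using \<open>a = b\<close> ij by (simp add: dl_def)
    then have "int n dvd (int (a i) - 1 - int (a i))" using qq_powi_inj by blast
    then have "int n dvd 1" by (simp add: dvd_minus_iff)
    then show False using n2 by simp
  qed
  ultimately show "a = b \<and> i = j" by simp
qed simp

lemma repO: "a \<in> idx m n \<Longrightarrow> cc \<in> idx m n \<Longrightarrow> rep (Oa a) (Oa cc) = (if a = cc then 1 else 0)"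
  using rep_basis[of "Oa a" "Oa cc"] B_ones O_inj[of cc a] by auto

lemma repOe: "a \<in> idx m n \<Longrightarrow> cc \<in> idx m n \<Longrightarrow> i < m \<Longrightarrow> j < m \<Longrightarrow>
   rep (Oa a * e i) (Oa cc * e j) = (if a = cc \<and> i = j then 1 else 0)"
  using rep_basis[of "Oa a * e i" "Oa cc * e j"] B_ones_e Oe_inj[of cc a j i] by auto

lemma rep_sumO: "cc \<in> idx m n \<Longrightarrow> rep (\<Sum>a\<in>idx m n. scale (f a) (Oa a)) (Oa cc) = f cc"
  by (simp add: rep_sum rep_scale repO idx_finite if_distrib cong: if_cong)

lemma rep_sumOe: "cc \<in> idx m n \<Longrightarrow> i < m \<Longrightarrow> j < m \<Longrightarrow>
   rep (\<Sum>a\<in>idx m n. scale (f a) (Oa a * e i)) (Oa cc * e j) = (if i = j then f cc else 0)"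
  by (simp add: rep_sum rep_scale repOe idx_finite if_distrib cong: if_cong)

lemma h_S: "k < m \<Longrightarrow> h k = (\<Sum>a\<in>idx m n. scale (qq powi int (a k)) (Oa a))"
proof -
  assume k: "k < m"
  have "h k = h k * (\<Sum>a\<in>idx m n. Oa a)" by (simp add: sum_O)
  also have "\<dots> = (\<Sum>a\<in>idx m n. scale (qq powi int (a k)) (Oa a))"
    by (simp add: sum_distrib_left h_O_eig k)
  finally show ?thesis .
qed

lemma e_S: "e i = (\<Sum>a\<in>idx m n. scale 1 (Oa a * e i))"
proof -
  have "e i = (\<Sum>a\<in>idx m n. Oa a) * e i" by (simp add: sum_O)
  then show ?thesis by (simp add: sum_distrib_right)
qed

lemma one_S: "k < m \<Longrightarrow> one k t = (\<Sum>a\<in>idx m n. scale (if int n dvd (int (a k) - int t) then 1 else 0) (Oa a))"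
proof -
  assume k: "k < m"
  have "one k t = one k t * (\<Sum>a\<in>idx m n. Oa a)" by (simp add: sum_O)
  also have "\<dots> = (\<Sum>a\<in>idx m n. scale (if int n dvd (int (a k) - int t) then 1 else 0) (Oa a))"
    unfolding sum_distrib_left
  proof (rule sum.cong)
    fix x assume "x \<in> idx m n"
    show "one k t * Oa x = scale (if int n dvd (int (x k) - int t) then 1 else 0) (Oa x)"
      by (rule one_eig) (simp add: h_O_eig k)
  qed simp
  finally show ?thesis .
qed

lemma e_O: "i < m \<Longrightarrow> e i * Oa b =
   (\<Sum>a\<in>idx m n. scale (if \<forall>k<m. int n dvd (int (a k) - dl k i - int (b k)) then 1 else 0) (Oa a * e i))"
proof -
  assume i: "i < m"
  have "e i * Oa b = (\<Sum>a\<in>idx m n. Oa a) * e i * Oa b" by (simp add: sum_O)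
  also have "\<dots> = (\<Sum>a\<in>idx m n. (Oa a * e i) * Oa b)" by (simp add: sum_distrib_right)
  finally show ?thesis using i by (simp add: OeO)
qed

end


context LQ begin

definition Os :: "'a set" where "Os = Oa ` idx m n"
definition Es :: "'a set" where "Es = {Oa a * e i | a i. a \<in> idx m n \<and> i < m}"
definition Hi :: "'a set" where "Hi = V.span (\<Union>d\<in>{2..}. G d)"

lemma Os_B: "Os \<subseteq> B" using B_ones by (auto simp: Os_def)
lemma Es_B: "Es \<subseteq> B" using B_ones_e by (auto simp: Es_def)

lemma S0_G0: "V.span Os \<subseteq> G 0"
  by (rule V.span_minimal) (auto simp: Os_def O_G0 Gsub)

lemma Oe_G1: "i < m \<Longrightarrow> Oa a * e i \<in> G 1"
  using G_mult[OF O_G0 e_deg[rule_format]] by simp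

lemma S1_G1: "V.span Es \<subseteq> G 1"
proof (rule V.span_minimal)
  show "Es \<subseteq> G 1" using Oe_G1 by (auto simp: Es_def)
qed (rule Gsub)

lemma span_mult:
  assumes XY: "\<And>x y. x \<in> X \<Longrightarrow> y \<in> Y \<Longrightarrow> x * y \<in> V.span Z"
    and x: "x \<in> V.span X" and y: "y \<in> V.span Y"
  shows "x * y \<in> V.span Z"
proof -
  have inner: "\<forall>y\<in>V.span Y. x' * y \<in> V.span Z" if x': "x' \<in> X" for x'
  proof
    fix y assume "y \<in> V.span Y"
    then show "x' * y \<in> V.span Z"
    proof (induction rule: V.span_induct)
      case (step y) then show ?case using XY x' by simp
    next
      case base show ?case
        unfolding V.subspace_def
        by (auto simp: distrib_left scale_mr V.span_zero V.span_add V.span_scale)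
    qed
  qed
  from x have "\<forall>y\<in>V.span Y. x * y \<in> V.span Z"
  proof (induction rule: V.span_induct)
    case (step x) then show ?case using inner by simp
  next
    case base show ?case
      unfolding V.subspace_def
      by (auto simp: distrib_right scale_ml V.span_zero V.span_add V.span_scale)
  qed
  then show ?thesis using y by simp
qed

lemma Hi_sub: "V.subspace Hi" by (simp add: Hi_def)

lemma G_Hi: "d \<ge> 2 \<Longrightarrow> x \<in> G d \<Longrightarrow> x \<in> Hi"
  unfolding Hi_def by (rule V.span_base) auto

lemma GG_Hi: "x \<in> G d \<Longrightarrow> y \<in> G d' \<Longrightarrow> d + d' \<ge> 2 \<Longrightarrow> x * y \<in> Hi"
  using G_mult G_Hi by blast

lemma Hi_elem: "x \<in> (\<Union>d\<in>{2..}. G d) \<Longrightarrow> \<exists>d\<ge>2. x \<in> G d" by auto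

lemma G_mult_Hi: "x \<in> G d \<Longrightarrow> y \<in> Hi \<Longrightarrow> x * y \<in> Hi"
  unfolding Hi_def
proof (rule span_mult[of "G d" "\<Union>d\<in>{2..}. G d"])
  fix x' y' assume "x' \<in> G d" "y' \<in> (\<Union>d\<in>{2..}. G d)"
  then obtain d' where "d' \<ge> 2" "y' \<in> G d'" by auto
  then show "x' * y' \<in> V.span (\<Union>d\<in>{2..}. G d)" using GG_Hi[of x' d y' d'] \<open>x' \<in> G d\<close> by (simp add: Hi_def)
qed (auto intro: V.span_base)

lemma Hi_mult_G: "x \<in> Hi \<Longrightarrow> y \<in> G d \<Longrightarrow> x * y \<in> Hi"
  unfolding Hi_def
proof (rule span_mult[of "\<Union>d\<in>{2..}. G d" "G d"])
  fix x' y' assume "y' \<in> G d" "x' \<in> (\<Union>d\<in>{2..}. G d)"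
  then obtain d' where "d' \<ge> 2" "x' \<in> G d'" by auto
  then show "x' * y' \<in> V.span (\<Union>d\<in>{2..}. G d)" using GG_Hi[of x' d' y' d] \<open>y' \<in> G d\<close> by (simp add: Hi_def)
qed (auto intro: V.span_base)

lemma Hi_mult_Hi: "x \<in> Hi \<Longrightarrow> y \<in> Hi \<Longrightarrow> x * y \<in> Hi"
  unfolding Hi_def
proof (rule span_mult[of "\<Union>d\<in>{2..}. G d" "\<Union>d\<in>{2..}. G d"])
  fix x' y' assume "y' \<in> (\<Union>d\<in>{2..}. G d)" "x' \<in> (\<Union>d\<in>{2..}. G d)"
  then obtain d d' where "d \<ge> 2" "y' \<in> G d" "d' \<ge> 2" "x' \<in> G d'" by auto
  then show "x' * y' \<in> V.span (\<Union>d\<in>{2..}. G d)" using GG_Hi[of x' d' y' d] by (simp add: Hi_def)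
qed auto

lemma eps_S1: "x \<in> V.span Es \<Longrightarrow> eps x = 0"
proof (induction rule: V.span_induct)
  case (step x)
  then show ?case using eps_mult eps_e by (auto simp: Es_def)
next
  case base show ?case
    unfolding V.subspace_def
    by (auto simp: lin_fun_add[OF eps_lin] lin_fun_scale[OF eps_lin] lin_fun_zero[OF eps_lin])
qed

lemma OO_S0: "x \<in> V.span Os \<Longrightarrow> y \<in> V.span Os \<Longrightarrow> x * y \<in> V.span Os"
proof (rule span_mult)
  fix x y assume "x \<in> Os" "y \<in> Os"
  then obtain a b where ab: "a \<in> idx m n" "b \<in> idx m n" "x = Oa a" "y = Oa b" by (auto simp: Os_def)
  have "Oa b \<in> V.span Os" using ab by (auto simp: Os_def intro: V.span_base)
  then show "x * y \<in> V.span Os" using ab by (simp add: OO V.span_zero)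
qed

lemma OE_S1: "x \<in> V.span Os \<Longrightarrow> y \<in> V.span Es \<Longrightarrow> x * y \<in> V.span Es"
proof (rule span_mult)
  fix x y assume "x \<in> Os" "y \<in> Es"
  then obtain a b i where ab: "a \<in> idx m n" "b \<in> idx m n" "i < m" "x = Oa a" "y = Oa b * e i"
    by (auto simp: Os_def Es_def)
  have "Oa b * e i \<in> V.span Es" using ab by (auto simp: Es_def intro!: V.span_base)
  then show "x * y \<in> V.span Es" using ab by (simp add: OOe V.span_zero)
qed

lemma EO_S1: "x \<in> V.span Es \<Longrightarrow> y \<in> V.span Os \<Longrightarrow> x * y \<in> V.span Es"
proof (rule span_mult)
  fix x y assume "x \<in> Es" "y \<in> Os"
  then obtain a b i where ab: "a \<in> idx m n" "b \<in> idx m n" "i < m" "x = Oa a * e i" "y = Oa b"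
    by (auto simp: Os_def Es_def)
  have "Oa a * e i \<in> V.span Es" using ab by (auto simp: Es_def intro!: V.span_base)
  then show "x * y \<in> V.span Es" using ab by (simp add: OeO V.span_scale)
qed

lemma decomp: "\<exists>s0 s1 r. s0 \<in> V.span Os \<and> s1 \<in> V.span Es \<and> r \<in> Hi \<and> eps r = 0 \<and> x = s0 + s1 + r"
proof -
  have "x \<in> gen_alg scale m h e" using gen by simp
  then show ?thesis
  proof (induction rule: gen_alg.induct)
    case 1
    have "(\<Sum>a\<in>idx m n. Oa a) \<in> V.span Os" unfolding Os_def
      by (intro V.span_sum V.span_base) auto
    then have "1 \<in> V.span Os" using sum_O by simp
    then show ?case using V.span_zero V.subspace_0[OF Hi_sub] lin_fun_zero[OF eps_lin]
      by (intro exI[of _ 1] exI[of _ 0]) auto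
  next
    case (2 i)
    have "(\<Sum>a\<in>idx m n. scale (qq powi int (a i)) (Oa a)) \<in> V.span Os" unfolding Os_def
      by (intro V.span_sum V.span_scale V.span_base) auto
    then have "h i \<in> V.span Os" using h_S[OF 2] by simp
    then show ?case using V.span_zero V.subspace_0[OF Hi_sub] lin_fun_zero[OF eps_lin]
      by (intro exI[of _ "h i"] exI[of _ 0]) auto
  next
    case (3 i)
    have "(\<Sum>a\<in>idx m n. scale 1 (Oa a * e i)) \<in> V.span Es" using 3 unfolding Es_def
      by (intro V.span_sum V.span_scale V.span_base) auto
    then have "e i \<in> V.span Es" using e_S[of i] by simp
    then show ?case using V.span_zero V.subspace_0[OF Hi_sub] lin_fun_zero[OF eps_lin]
      by (intro exI[of _ 0] exI[of _ "e i"] exI[of _ 0]) auto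
  next
    case (4 x y)
    then obtain s0 s1 r t0 t1 r' where
      "s0 \<in> V.span Os" "s1 \<in> V.span Es" "r \<in> Hi" "eps r = 0" "x = s0 + s1 + r"
      "t0 \<in> V.span Os" "t1 \<in> V.span Es" "r' \<in> Hi" "eps r' = 0" "y = t0 + t1 + r'" by blast
    note A = this
    have "x + y = (s0 + t0) + (s1 + t1) + (r + r')" using A by (simp add: add_ac)
    moreover have "s0 + t0 \<in> V.span Os" "s1 + t1 \<in> V.span Es" "r + r' \<in> Hi" "eps (r + r') = 0"
      using A by (auto simp: V.span_add V.subspace_add[OF Hi_sub] lin_fun_add[OF eps_lin])
    ultimately show ?case by blast
  next
    case (5 x y)
    then obtain s0 s1 r t0 t1 r' where
      A: "s0 \<in> V.span Os" "s1 \<in> V.span Es" "r \<in> Hi" "eps r = 0" "x = s0 + s1 + r"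
      "t0 \<in> V.span Os" "t1 \<in> V.span Es" "r' \<in> Hi" "eps r' = 0" "y = t0 + t1 + r'" by blast
    have G: "s0 \<in> G 0" "t0 \<in> G 0" "s1 \<in> G 1" "t1 \<in> G 1"
      using A S0_G0 S1_G1 by auto
    define R where "R = s1 * t1 + s0 * r' + s1 * r' + r * t0 + r * t1 + r * r'"
    have "x * y = s0 * t0 + (s0 * t1 + s1 * t0) + R"
      unfolding A(5) A(10) R_def by (simp add: distrib_left distrib_right add_ac)
    moreover have "s0 * t0 \<in> V.span Os" using A OO_S0 by simp
    moreover have "s0 * t1 + s1 * t0 \<in> V.span Es" using A OE_S1 EO_S1 V.span_add by simp
    moreover have "R \<in> Hi"
    proof -
      have "s1 * t1 \<in> G (1 + 1)" using G_mult[OF G(3,4)] .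
      then have "s1 * t1 \<in> G 2" by (simp only: one_add_one)
      then have "s1 * t1 \<in> Hi" using G_Hi[of 2] by simp
      moreover have "s0 * r' \<in> Hi" by (rule G_mult_Hi[OF G(1) A(8)])
      moreover have "s1 * r' \<in> Hi" by (rule G_mult_Hi[OF G(3) A(8)])
      moreover have "r * t0 \<in> Hi" by (rule Hi_mult_G[OF A(3) G(2)])
      moreover have "r * t1 \<in> Hi" by (rule Hi_mult_G[OF A(3) G(4)])
      moreover have "r * r' \<in> Hi" by (rule Hi_mult_Hi[OF A(3) A(8)])
      ultimately show ?thesis unfolding R_def by (meson V.subspace_add[OF Hi_sub])
    qed
    moreover have "eps R = 0"
      using A eps_S1 by (simp add: R_def lin_fun_add[OF eps_lin] eps_mult)
    ultimately show ?case by blast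
  next
    case (6 x k)
    then obtain s0 s1 r where
      A: "s0 \<in> V.span Os" "s1 \<in> V.span Es" "r \<in> Hi" "eps r = 0" "x = s0 + s1 + r" by blast
    have "scale k x = scale k s0 + scale k s1 + scale k r" using A by (simp add: V.scale_right_distrib)
    moreover have "scale k s0 \<in> V.span Os" "scale k s1 \<in> V.span Es" "scale k r \<in> Hi" "eps (scale k r) = 0"
      using A by (auto simp: V.span_scale V.subspace_scale[OF Hi_sub] lin_fun_scale[OF eps_lin])
    ultimately show ?case by blast
  qed
qed

lemma lemL_Hi: "r \<in> Hi \<Longrightarrow> b0 \<in> B \<Longrightarrow> b0 \<in> G k \<Longrightarrow> k < 2 \<Longrightarrow> rep r b0 = 0"
  unfolding Hi_def
proof (induction rule: V.span_induct)
  case (step x) then show ?case using lemL by auto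
next
  case base show ?case unfolding V.subspace_def by (auto simp: rep_add rep_scale rep_zero)
qed

lemma rep_dec: "x = s0 + s1 + r \<Longrightarrow> rep x b = rep s0 b + rep s1 b + rep r b"
  by (simp add: rep_add)

lemma M0: "b \<in> B \<Longrightarrow> b \<in> G 0 \<Longrightarrow> b \<in> Os"
proof -
  assume b: "b \<in> B" "b \<in> G 0"
  obtain s0 s1 r where A: "s0 \<in> V.span Os" "s1 \<in> V.span Es" "r \<in> Hi" "b = s0 + s1 + r"
    using decomp by blast
  have "b = s0"
  proof (rule rep_inj)
    fix b' assume b': "b' \<in> B"
    then obtain k where k: "b' \<in> G k" using B_hom by blast
    show "rep b b' = rep s0 b'"
    proof (cases "k = 0")
      case True
      then have "rep s1 b' = 0" "rep r b' = 0"
        using lemL[of s1 1 b' k] lemL_Hi[of r b' k] A S1_G1 b' k by auto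
      then show ?thesis using rep_dec[OF A(4)] by simp
    next
      case False
      then show ?thesis using lemL[of b 0 b' k] lemL[of s0 0 b' k] A S0_G0 b b' k by auto
    qed
  qed
  then have "b \<in> V.span Os" using A(1) by simp
  show "b \<in> Os"
  proof (rule ccontr)
    assume "b \<notin> Os"
    then have "Os \<subseteq> B - {b}" using Os_B by auto
    then have "b \<in> V.span (B - {b})" using V.span_mono \<open>b \<in> V.span Os\<close> by blast
    then show False using indep b V.dependent_def by blast
  qed
qed

lemma M1: "b \<in> B \<Longrightarrow> b \<in> G 1 \<Longrightarrow> b \<in> Es"
proof -
  assume b: "b \<in> B" "b \<in> G 1"
  obtain s0 s1 r where A: "s0 \<in> V.span Os" "s1 \<in> V.span Es" "r \<in> Hi" "b = s0 + s1 + r"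
    using decomp by blast
  have "b = s1"
  proof (rule rep_inj)
    fix b' assume b': "b' \<in> B"
    then obtain k where k: "b' \<in> G k" using B_hom by blast
    show "rep b b' = rep s1 b'"
    proof (cases "k = 1")
      case True
      then have "rep s0 b' = 0" "rep r b' = 0"
        using lemL[of s0 0 b' k] lemL_Hi[of r b' k] A S0_G0 b' k by auto
      then show ?thesis using rep_dec[OF A(4)] by simp
    next
      case False
      then show ?thesis using lemL[of b 1 b' k] lemL[of s1 1 b' k] A S1_G1 b b' k by auto
    qed
  qed
  then have "b \<in> V.span Es" using A(2) by simp
  show "b \<in> Es"
  proof (rule ccontr)
    assume "b \<notin> Es"
    then have "Es \<subseteq> B - {b}" using Es_B by auto
    then have "b \<in> V.span (B - {b})" using V.span_mono \<open>b \<in> V.span Es\<close> by blast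
    then show False using indep b V.dependent_def by blast
  qed
qed

lemma M2: "x \<in> G k \<Longrightarrow> k \<ge> 1 \<Longrightarrow> eps x = 0"
proof -
  assume x: "x \<in> G k" "k \<ge> 1"
  obtain s0 s1 r where A: "s0 \<in> V.span Os" "s1 \<in> V.span Es" "r \<in> Hi" "eps r = 0" "x = s0 + s1 + r"
    using decomp by blast
  have "s0 = 0"
  proof (rule rep_eq0)
    fix b' assume b': "b' \<in> B"
    then obtain k' where k': "b' \<in> G k'" using B_hom by blast
    show "rep s0 b' = 0"
    proof (cases "k' = 0")
      case True
      then have "rep s1 b' = 0" "rep r b' = 0" "rep x b' = 0"
        using lemL[of s1 1 b' k'] lemL_Hi[of r b' k'] lemL[of x k b' k'] A S1_G1 b' k' x by auto
      then show ?thesis using rep_dec[OF A(5)] by simp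
    next
      case False
      then show ?thesis using lemL[of s0 0 b' k'] A S0_G0 b' k' by auto
    qed
  qed
  then show ?thesis using A eps_S1 by (simp add: lin_fun_add[OF eps_lin])
qed

end


context LQ begin

definition chr :: "('a \<Rightarrow> 'k) \<Rightarrow> bool" where
  "chr f \<longleftrightarrow> lin_fun scale f \<and> (\<forall>x y. f (x * y) = f x * f y) \<and> f 1 = 1"

definition der :: "('a \<Rightarrow> 'k) \<Rightarrow> ('a \<Rightarrow> 'k) \<Rightarrow> ('a \<Rightarrow> 'k) \<Rightarrow> bool" where
  "der p s D \<longleftrightarrow> lin_fun scale D \<and> (\<forall>x y. D (x * y) = p x * D y + D x * s y)"

definition chiw :: "(nat \<Rightarrow> nat) \<Rightarrow> 'a \<Rightarrow> 'k" where "chiw w x = rep x (Oa w)"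
definition Gm :: "nat \<Rightarrow> 'a \<Rightarrow> 'k" where "Gm j x = rep x (Oa (unitv j) * e j)"

lemma chr_eq:
  assumes "chr f" "chr g" "\<And>k. k < m \<Longrightarrow> f (h k) = g (h k)" "\<And>k. k < m \<Longrightarrow> f (e k) = g (e k)"
  shows "f = g"
proof
  fix x
  have "x \<in> gen_alg scale m h e" using gen by simp
  then show "f x = g x"
    by (induction rule: gen_alg.induct)
       (use assms in \<open>auto simp: chr_def lin_fun_add lin_fun_scale\<close>)
qed

lemma der_one: "der p s D \<Longrightarrow> p 1 = 1 \<Longrightarrow> s 1 = 1 \<Longrightarrow> D 1 = 0"
  unfolding der_def by (metis add_cancel_left_left mult_1 mult_1_right)

lemma der_eq:
  assumes "der p s D1" "der p s D2" "p 1 = 1" "s 1 = 1"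
    "\<And>k. k < m \<Longrightarrow> D1 (h k) = D2 (h k)" "\<And>k. k < m \<Longrightarrow> D1 (e k) = D2 (e k)"
  shows "D1 = D2"
proof
  fix x
  have "x \<in> gen_alg scale m h e" using gen by simp
  then show "D1 x = D2 x"
  proof (induction rule: gen_alg.induct)
    case 1 then show ?case using der_one assms by metis
  qed (use assms in \<open>auto simp: der_def lin_fun_add lin_fun_scale\<close>)
qed

lemma unitv_idx: "j < m \<Longrightarrow> unitv j \<in> idx m n" using n2 by (auto simp: idx_def unitv_def)
lemma negu_idx: "j < m \<Longrightarrow> neg_unitv n j \<in> idx m n" using n2 by (auto simp: idx_def neg_unitv_def)
lemma zero_idx: "(\<lambda>_. 0) \<in> idx m n" using n2 by (auto simp: idx_def)

lemma lin_chiw: "lin_fun scale (chiw w)" unfolding chiw_def[abs_def] by (rule lin_rep)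
lemma lin_Gm: "lin_fun scale (Gm j)" unfolding Gm_def[abs_def] by (rule lin_rep)

lemma chi_O: "a \<in> idx m n \<Longrightarrow> w \<in> idx m n \<Longrightarrow> chiw w (Oa a) = (if a = w then 1 else 0)"
  by (simp add: chiw_def repO)

lemma chi_sum: "w \<in> idx m n \<Longrightarrow> chiw w (\<Sum>a\<in>idx m n. scale (f a) (Oa a)) = f w"
  by (simp add: chiw_def rep_sumO)

lemma chi_h: "w \<in> idx m n \<Longrightarrow> k < m \<Longrightarrow> chiw w (h k) = qq powi int (w k)"
  using chi_sum[of w "\<lambda>a. qq powi int (a k)"] h_S[of k] by simp

lemma chi_one: "w \<in> idx m n \<Longrightarrow> chiw w 1 = 1"
  using chi_sum[of w "\<lambda>a. 1"] sum_O by simp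

lemma chi_e: "w \<in> idx m n \<Longrightarrow> i < m \<Longrightarrow> chiw w (e i) = 0"
  unfolding chiw_def using lemL[of "e i" 1 "Oa w" 0] e_deg B_ones O_G0 by auto

lemma chi_hy: "w \<in> idx m n \<Longrightarrow> k < m \<Longrightarrow> chiw w (h k * y) = qq powi int (w k) * chiw w y"
proof -
  assume w: "w \<in> idx m n" and k: "k < m"
  have "(\<lambda>y. chiw w (h k * y)) = (\<lambda>y. qq powi int (w k) * chiw w y)"
  proof (rule lin_eq_B)
    show "lin_fun scale (\<lambda>y. chiw w (h k * y))"
      by (rule lin_funI) (simp_all add: distrib_left scale_mr lin_fun_add[OF lin_chiw] lin_fun_scale[OF lin_chiw])
    show "lin_fun scale (\<lambda>y. qq powi int (w k) * chiw w y)"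
      by (rule lin_funI) (simp_all add: lin_fun_add[OF lin_chiw] lin_fun_scale[OF lin_chiw] algebra_simps)
    fix b assume b: "b \<in> B"
    then obtain d where d: "b \<in> G d" using B_hom by blast
    show "chiw w (h k * b) = qq powi int (w k) * chiw w b"
    proof (cases "d = 0")
      case True
      then have "b \<in> Os" using M0 b d by simp
      then obtain a where a: "a \<in> idx m n" "b = Oa a" by (auto simp: Os_def)
      then show ?thesis using w k by (simp add: h_O_eig lin_fun_scale[OF lin_chiw] chi_O)
    next
      case False
      have "h k * b \<in> G d" using G_mult[OF h_deg[rule_format, OF k] d] by simp
      then show ?thesis unfolding chiw_def using lemL[of _ d "Oa w" 0] lemL[of b d "Oa w" 0] False d
          B_ones w O_G0 by auto
    qed
  qed
  then show ?thesis by metis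
qed

lemma chi_ey: "w \<in> idx m n \<Longrightarrow> i < m \<Longrightarrow> chiw w (e i * y) = 0"
proof -
  assume w: "w \<in> idx m n" and i: "i < m"
  have "(\<lambda>y. chiw w (e i * y)) = (\<lambda>y. 0)"
  proof (rule lin_eq_B)
    show "lin_fun scale (\<lambda>y. chiw w (e i * y))"
      by (rule lin_funI) (simp_all add: distrib_left scale_mr lin_fun_add[OF lin_chiw] lin_fun_scale[OF lin_chiw])
    show "lin_fun scale (\<lambda>y. 0::'k)" by (rule lin_funI) simp_all
    fix b assume b: "b \<in> B"
    then obtain d where d: "b \<in> G d" using B_hom by blast
    have "e i * b \<in> G (1 + d)" using G_mult[OF e_deg[rule_format, OF i] d] .
    then show "chiw w (e i * b) = 0" unfolding chiw_def using lemL[of _ "1 + d" "Oa w" 0] B_ones w O_G0 by auto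
  qed
  then show ?thesis by metis
qed

lemma chr_chiw: "w \<in> idx m n \<Longrightarrow> chr (chiw w)"
proof -
  assume w: "w \<in> idx m n"
  have "\<forall>y. chiw w (x * y) = chiw w x * chiw w y" for x
  proof -
    have "x \<in> gen_alg scale m h e" using gen by simp
    then show ?thesis
    proof (induction rule: gen_alg.induct)
      case 1 then show ?case using chi_one[OF w] by simp
    next
      case (2 i) then show ?case using chi_hy[OF w] chi_h[OF w] by simp
    next
      case (3 i) then show ?case using chi_ey[OF w] chi_e[OF w] by simp
    next
      case (4 x y) then show ?case by (simp add: distrib_right lin_fun_add[OF lin_chiw] algebra_simps)
    next
      case (5 x y) then show ?case by (simp add: mult.assoc)
    next
      case (6 x k) then show ?case by (simp add: scale_ml lin_fun_scale[OF lin_chiw])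
    qed
  qed
  then show ?thesis using lin_chiw chi_one[OF w] by (simp add: chr_def)
qed

lemma chr_eps: "chr eps" using eps_lin eps_mult eps_one by (simp add: chr_def)

lemma eps_chiw: "eps = chiw (\<lambda>_. 0)"
  by (rule chr_eq[OF chr_eps chr_chiw[OF zero_idx]])
     (simp_all add: chi_h[OF zero_idx] chi_e[OF zero_idx] eps_h eps_e)

lemma gam_h: "j < m \<Longrightarrow> k < m \<Longrightarrow> Gm j (h k) = 0"
  unfolding Gm_def using lemL[of "h k" 0 "Oa (unitv j) * e j" 1] h_deg B_ones_e unitv_idx Oe_G1 by auto

lemma gam_one: "j < m \<Longrightarrow> Gm j 1 = 0"
  unfolding Gm_def using lemL[of 1 0 "Oa (unitv j) * e j" 1] one_G0 B_ones_e unitv_idx Oe_G1 by auto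

lemma gam_sum: "j < m \<Longrightarrow> i < m \<Longrightarrow>
   Gm j (\<Sum>a\<in>idx m n. scale (f a) (Oa a * e i)) = (if i = j then f (unitv j) else 0)"
  unfolding Gm_def by (rule rep_sumOe) (auto simp: unitv_idx)

lemma gam_e: "j < m \<Longrightarrow> i < m \<Longrightarrow> Gm j (e i) = (if i = j then 1 else 0)"
  using gam_sum[of j i "\<lambda>_. 1"] e_S[of i] by simp

lemma gam_Oe: "j < m \<Longrightarrow> i < m \<Longrightarrow> a \<in> idx m n \<Longrightarrow> Gm j (Oa a * e i) = (if a = unitv j \<and> i = j then 1 else 0)"
  unfolding Gm_def by (simp add: repOe unitv_idx)

lemma gam_hy: "j < m \<Longrightarrow> k < m \<Longrightarrow> Gm j (h k * y) = qq powi int (unitv j k) * Gm j y"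
proof -
  assume j: "j < m" and k: "k < m"
  have "(\<lambda>y. Gm j (h k * y)) = (\<lambda>y. qq powi int (unitv j k) * Gm j y)"
  proof (rule lin_eq_B)
    show "lin_fun scale (\<lambda>y. Gm j (h k * y))"
      by (rule lin_funI) (simp_all add: distrib_left scale_mr lin_fun_add[OF lin_Gm] lin_fun_scale[OF lin_Gm])
    show "lin_fun scale (\<lambda>y. qq powi int (unitv j k) * Gm j y)"
      by (rule lin_funI) (simp_all add: lin_fun_add[OF lin_Gm] lin_fun_scale[OF lin_Gm] algebra_simps)
    fix b assume b: "b \<in> B"
    then obtain d where d: "b \<in> G d" using B_hom by blast
    show "Gm j (h k * b) = qq powi int (unitv j k) * Gm j b"
    proof (cases "d = 1")
      case True
      then have "b \<in> Es" using M1 b d by simp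
      then obtain a i where a: "a \<in> idx m n" "i < m" "b = Oa a * e i" by (auto simp: Es_def)
      then show ?thesis using j k by (simp add: Oe_left lin_fun_scale[OF lin_Gm] gam_Oe)
    next
      case False
      have "h k * b \<in> G d" using G_mult[OF h_deg[rule_format, OF k] d] by simp
      then show ?thesis unfolding Gm_def
        using lemL[of _ d "Oa (unitv j) * e j" 1] lemL[of b d "Oa (unitv j) * e j" 1] False d
          B_ones_e unitv_idx[OF j] j Oe_G1 by auto
    qed
  qed
  then show ?thesis by metis
qed

lemma unitv_dl: "int (unitv j k) = dl k j" by (simp add: unitv_def dl_def)

lemma gam_ey: "j < m \<Longrightarrow> i < m \<Longrightarrow> Gm j (e i * y) = Gm j (e i) * eps y"
proof -
  assume j: "j < m" and i: "i < m"
  have "(\<lambda>y. Gm j (e i * y)) = (\<lambda>y. Gm j (e i) * eps y)"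
  proof (rule lin_eq_B)
    show "lin_fun scale (\<lambda>y. Gm j (e i * y))"
      by (rule lin_funI) (simp_all add: distrib_left scale_mr lin_fun_add[OF lin_Gm] lin_fun_scale[OF lin_Gm])
    show "lin_fun scale (\<lambda>y. Gm j (e i) * eps y)"
      by (rule lin_funI) (simp_all add: lin_fun_add[OF eps_lin] lin_fun_scale[OF eps_lin] algebra_simps)
    fix b assume b: "b \<in> B"
    then obtain d where d: "b \<in> G d" using B_hom by blast
    show "Gm j (e i * b) = Gm j (e i) * eps b"
    proof (cases "d = 0")
      case True
      then have "b \<in> Os" using M0 b d by simp
      then obtain a where a: "a \<in> idx m n" "b = Oa a" by (auto simp: Os_def)
      have "Gm j (e i * Oa a) = (if i = j then (if \<forall>k<m. int n dvd (int (unitv j k) - dl k i - int (a k)) then 1 else 0) else 0)"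
        using e_O[OF i, of a] gam_sum[OF j i] by simp
      also have "\<dots> = (if i = j then (if a = (\<lambda>_. 0) then 1 else 0) else 0)"
      proof (cases "i = j")
        case True
        have "(\<forall>k<m. int n dvd (int (unitv j k) - dl k i - int (a k))) \<longleftrightarrow>
              (\<forall>k<m. int n dvd (int ((\<lambda>_. 0::nat) k) - int (a k)))"
          using True by (simp add: unitv_dl)
        also have "\<dots> \<longleftrightarrow> a = (\<lambda>_. 0)" using idx_eq[OF a(1) zero_idx] by auto
        finally have P: "(\<forall>k<m. int n dvd (int (unitv j k) - dl k i - int (a k))) \<longleftrightarrow> a = (\<lambda>_. 0)" .
        show ?thesis by (simp only: P)
      qed simp
      also have "\<dots> = Gm j (e i) * eps (Oa a)"
        using a(1) by (simp add: gam_e i j eps_chiw chi_O zero_idx)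
      finally show ?thesis using a by simp
    next
      case False
      have "e i * b \<in> G (1 + d)" using G_mult[OF e_deg[rule_format, OF i] d] .
      then have "Gm j (e i * b) = 0" unfolding Gm_def
        using lemL[of _ "1 + d" "Oa (unitv j) * e j" 1] False B_ones_e unitv_idx[OF j] j Oe_G1 by auto
      moreover have "eps b = 0" using M2[OF d] False by simp
      ultimately show ?thesis by simp
    qed
  qed
  then show ?thesis by metis
qed

lemma der_Gm: "j < m \<Longrightarrow> der (chiw (unitv j)) eps (Gm j)"
proof -
  assume j: "j < m"
  have cj: "chr (chiw (unitv j))" using chr_chiw unitv_idx j by simp
  have "\<forall>y. Gm j (x * y) = chiw (unitv j) x * Gm j y + Gm j x * eps y" for x
  proof -
    have "x \<in> gen_alg scale m h e" using gen by simp
    then show ?thesis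
    proof (induction rule: gen_alg.induct)
      case 1 then show ?case using chi_one unitv_idx j gam_one by simp
    next
      case (2 k) then show ?case using gam_hy[OF j 2] chi_h[OF unitv_idx[OF j] 2] gam_h[OF j 2] by simp
    next
      case (3 i) then show ?case using gam_ey[OF j 3] chi_e[OF unitv_idx[OF j] 3] by simp
    next
      case (4 x y) then show ?case
        by (simp add: distrib_right lin_fun_add[OF lin_Gm] lin_fun_add[OF lin_chiw] lin_fun_add[OF eps_lin] algebra_simps)
    next
      case (5 x y)
      have "\<forall>z. Gm j (x * y * z) = chiw (unitv j) (x * y) * Gm j z + Gm j (x * y) * eps z"
      proof
        fix z
        have "Gm j (x * y * z) = chiw (unitv j) x * (chiw (unitv j) y * Gm j z + Gm j y * eps z) + Gm j x * eps (y * z)"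
          using 5 by (simp add: mult.assoc)
        moreover have "chiw (unitv j) (x * y) = chiw (unitv j) x * chiw (unitv j) y" using cj by (simp add: chr_def)
        moreover have "Gm j (x * y) = chiw (unitv j) x * Gm j y + Gm j x * eps y" using 5 by simp
        ultimately show "Gm j (x * y * z) = chiw (unitv j) (x * y) * Gm j z + Gm j (x * y) * eps z"
          using eps_mult by (simp add: algebra_simps)
      qed
      then show ?case .
    next
      case (6 x k) then show ?case
        by (simp add: scale_ml lin_fun_scale[OF lin_Gm] lin_fun_scale[OF lin_chiw] algebra_simps)
    qed
  qed
  then show ?thesis using lin_Gm by (simp add: der_def)
qed

end


lemma sl_bilin:
  "sum_list (map (\<lambda>p. sum_list (map (\<lambda>p'. A p * C p') ys)) xs)
   = sum_list (map A xs) * (sum_list (map C ys) :: 'k::comm_ring)"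
  by (induction xs) (simp_all add: sum_list_const_mult distrib_right)

lemma pt_append: "pair_tensor f g (xs @ ys) = pair_tensor f g xs + pair_tensor f g ys"
  by (simp add: pair_tensor_def)

lemma pt_tmult: "pair_tensor f g (tmult xs ys) =
   sum_list (map (\<lambda>p. sum_list (map (\<lambda>p'. f (fst p * fst p') * g (snd p * snd p')) ys)) xs)"
  by (induction xs) (auto simp: tmult_def pair_tensor_def split_def comp_def)

context LQ begin

lemma pt_scale: "lin_fun scale f \<Longrightarrow>
   pair_tensor f g (map (\<lambda>(u, v). (scale k u, v)) xs) = k * pair_tensor f g xs"
  by (induction xs) (auto simp: pair_tensor_def lin_fun_scale algebra_simps)

lemma teqD: "teq scale xs ys \<Longrightarrow> lin_fun scale f \<Longrightarrow> lin_fun scale g \<Longrightarrow> pair_tensor f g xs = pair_tensor f g ys"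
  by (simp add: teq_def)

lemma cp_add: "teq scale (Dl (x + y)) (Dl x @ Dl y)" using coprod by (simp add: Aq_coproduct_def)
lemma cp_scale: "teq scale (Dl (scale k x)) (map (\<lambda>(u, v). (scale k u, v)) (Dl x))"
  using coprod by (simp add: Aq_coproduct_def)
lemma cp_mult: "teq scale (Dl (x * y)) (tmult (Dl x) (Dl y))" using coprod by (simp add: Aq_coproduct_def)
lemma cp_one: "teq scale (Dl 1) [(1, 1)]" using coprod by (simp add: Aq_coproduct_def)
lemma cp_h: "i < m \<Longrightarrow> teq scale (Dl (h i)) [(h i, h i)]" using coprod by (simp add: Aq_coproduct_def)
lemma cp_e: "i < m \<Longrightarrow> teq scale (Dl (e i))
        [(e i, b_inv scale m n q c h i),
         (1, (\<Sum>t\<in>{1..n-1}. one_ik scale n q h i t) * e i),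
         (H_inv m n c h i, one_ik scale n q h i 0 * e i)]"
  using coprod by (simp add: Aq_coproduct_def)

lemma conv_lin: "lin_fun scale f \<Longrightarrow> lin_fun scale g \<Longrightarrow> lin_fun scale (conv Dl f g)"
  by (rule lin_funI) (simp_all add: conv_def teqD[OF cp_add] teqD[OF cp_scale] pt_append pt_scale)

lemma conv_one: "lin_fun scale f \<Longrightarrow> lin_fun scale g \<Longrightarrow> conv Dl f g 1 = f 1 * g 1"
  unfolding conv_def by (subst teqD[OF cp_one], assumption+) (simp add: pair_tensor_def)

lemma conv_h: "lin_fun scale f \<Longrightarrow> lin_fun scale g \<Longrightarrow> k < m \<Longrightarrow> conv Dl f g (h k) = f (h k) * g (h k)"
  unfolding conv_def by (subst teqD[OF cp_h], assumption+) (simp add: pair_tensor_def)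

lemma conv_e: "lin_fun scale f \<Longrightarrow> lin_fun scale g \<Longrightarrow> i < m \<Longrightarrow> conv Dl f g (e i) =
   f (e i) * g (b_inv scale m n q c h i) + f 1 * g ((\<Sum>t\<in>{1..n-1}. one i t) * e i)
   + f (H_inv m n c h i) * g (one i 0 * e i)"
  unfolding conv_def by (subst teqD[OF cp_e], assumption+) (simp add: pair_tensor_def)

lemma conv_mult: "lin_fun scale f \<Longrightarrow> lin_fun scale g \<Longrightarrow>
   conv Dl f g (x * y) = sum_list (map (\<lambda>p. sum_list (map (\<lambda>p'. f (fst p * fst p') * g (snd p * snd p')) (Dl y))) (Dl x))"
  by (simp add: conv_def teqD[OF cp_mult] pt_tmult)

lemma pt_split: "pair_tensor f g xs = sum_list (map (\<lambda>p. f (fst p) * g (snd p)) xs)"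
  by (simp add: pair_tensor_def split_def)

lemma chr_conv: "chr f \<Longrightarrow> chr g \<Longrightarrow> chr (conv Dl f g)"
proof -
  assume f: "chr f" and g: "chr g"
  have lf: "lin_fun scale f" and lg: "lin_fun scale g" using f g by (auto simp: chr_def)
  have "conv Dl f g (x * y) = conv Dl f g x * conv Dl f g y" for x y
  proof -
    have "conv Dl f g (x * y) = sum_list (map (\<lambda>p. sum_list (map (\<lambda>p'. (f (fst p) * g (snd p)) * (f (fst p') * g (snd p'))) (Dl y))) (Dl x))"
      using f g by (simp add: conv_mult[OF lf lg] chr_def algebra_simps)
    also have "\<dots> = conv Dl f g x * conv Dl f g y"
      by (simp only: sl_bilin conv_def pt_split)
    finally show ?thesis .
  qed
  then show ?thesis using conv_lin[OF lf lg] conv_one[OF lf lg] f g by (simp add: chr_def)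
qed

lemma der_conv_l: "chr f \<Longrightarrow> chr p \<Longrightarrow> chr s \<Longrightarrow> der p s D \<Longrightarrow> der (conv Dl f p) (conv Dl f s) (conv Dl f D)"
proof -
  assume f: "chr f" and p: "chr p" and s: "chr s" and D: "der p s D"
  have lf: "lin_fun scale f" and lp: "lin_fun scale p" and ls: "lin_fun scale s" and lD: "lin_fun scale D"
    using f p s D by (auto simp: chr_def der_def)
  have "conv Dl f D (x * y) = conv Dl f p x * conv Dl f D y + conv Dl f D x * conv Dl f s y" for x y
  proof -
    have "conv Dl f D (x * y) = sum_list (map (\<lambda>u. sum_list (map (\<lambda>u'. (f (fst u) * p (snd u)) * (f (fst u') * D (snd u'))) (Dl y))) (Dl x))
       + sum_list (map (\<lambda>u. sum_list (map (\<lambda>u'. (f (fst u) * D (snd u)) * (f (fst u') * s (snd u'))) (Dl y))) (Dl x))"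
      using f D by (simp add: conv_mult[OF lf lD] chr_def der_def algebra_simps flip: sum_list_addf)
    also have "\<dots> = conv Dl f p x * conv Dl f D y + conv Dl f D x * conv Dl f s y"
      by (simp only: sl_bilin conv_def pt_split)
    finally show ?thesis .
  qed
  then show ?thesis using conv_lin[OF lf lD] by (simp add: der_def)
qed

lemma der_conv_r: "chr g \<Longrightarrow> chr p \<Longrightarrow> chr s \<Longrightarrow> der p s D \<Longrightarrow> der (conv Dl p g) (conv Dl s g) (conv Dl D g)"
proof -
  assume g: "chr g" and p: "chr p" and s: "chr s" and D: "der p s D"
  have lg: "lin_fun scale g" and lp: "lin_fun scale p" and ls: "lin_fun scale s" and lD: "lin_fun scale D"
    using g p s D by (auto simp: chr_def der_def)
  have "conv Dl D g (x * y) = conv Dl p g x * conv Dl D g y + conv Dl D g x * conv Dl s g y" for x y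
  proof -
    have "conv Dl D g (x * y) = sum_list (map (\<lambda>u. sum_list (map (\<lambda>u'. (p (fst u) * g (snd u)) * (D (fst u') * g (snd u'))) (Dl y))) (Dl x))
       + sum_list (map (\<lambda>u. sum_list (map (\<lambda>u'. (D (fst u) * g (snd u)) * (s (fst u') * g (snd u'))) (Dl y))) (Dl x))"
      using g D by (simp add: conv_mult[OF lD lg] chr_def der_def algebra_simps flip: sum_list_addf)
    also have "\<dots> = conv Dl p g x * conv Dl D g y + conv Dl D g x * conv Dl s g y"
      by (simp only: sl_bilin conv_def pt_split)
    finally show ?thesis .
  qed
  then show ?thesis using conv_lin[OF lD lg] by (simp add: der_def)
qed

end


context LQ begin

lemma chr_lin: "chr f \<Longrightarrow> lin_fun scale f" by (simp add: chr_def)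

lemma chr_e0: "chr f \<Longrightarrow> f (e k) = 0 \<Longrightarrow> f (y * e k) = 0" by (simp add: chr_def)

lemma conv_e0: "chr f \<Longrightarrow> chr g \<Longrightarrow> k < m \<Longrightarrow> f (e k) = 0 \<Longrightarrow> g (e k) = 0 \<Longrightarrow> conv Dl f g (e k) = 0"
  by (simp add: conv_e chr_lin chr_e0)

lemma chi_oneik: "w \<in> idx m n \<Longrightarrow> k < m \<Longrightarrow> chiw w (one k t) = (if int n dvd (int (w k) - int t) then 1 else 0)"
  using chi_sum[of w "\<lambda>a. if int n dvd (int (a k) - int t) then 1 else 0"] one_S[of k t] by simp

lemma chi_binv: "w \<in> idx m n \<Longrightarrow> chiw w (b_inv scale m n q c h k) = (\<Prod>l<m. q powi (c k l * int (w l)))"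
  unfolding b_inv_def by (rule chi_sum)

lemma uin: "qq powi int (unitv i k) * qq powi int (neg_unitv n i k) = 1"
proof (cases "k = i")
  case True
  have "qq powi int (unitv i k) * qq powi int (neg_unitv n i k) = qq * qq ^ (n - 1)"
    using True by (simp add: unitv_def neg_unitv_def)
  also have "\<dots> = qq ^ n" using n2 by (simp flip: power_Suc)
  finally show ?thesis using qq_n by simp
qed (simp add: unitv_def neg_unitv_def)

lemma gam_ye: "j < m \<Longrightarrow> k < m \<Longrightarrow> Gm j (y * e k) = chiw (unitv j) y * (if k = j then 1 else 0)"
  using der_Gm[of j] eps_e gam_e by (simp add: der_def)

lemma sum_ind: "(\<Sum>t\<in>{1..n-1}. if int n dvd (1 - int t) then (1::'k) else 0) = 1"
proof -
  have "(\<Sum>t\<in>{1..n-1}. if int n dvd (1 - int t) then (1::'k) else 0) = (\<Sum>t\<in>{1..n-1}. if t = 1 then 1 else 0)"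
  proof (rule sum.cong)
    fix t assume t: "t \<in> {1..n-1}"
    have "int n dvd (1 - int t) \<longleftrightarrow> int n dvd (int t - 1)"
      by (metis dvd_minus_iff minus_diff_eq)
    also have "\<dots> \<longleftrightarrow> int n dvd int (t - 1)" using t by (simp add: of_nat_diff)
    also have "\<dots> \<longleftrightarrow> n dvd (t - 1)" by simp
    also have "\<dots> \<longleftrightarrow> t = 1" using t n2 by (auto dest: dvd_imp_le)
    finally show "(if int n dvd (1 - int t) then (1::'k) else 0) = (if t = 1 then 1 else 0)" by simp
  qed simp
  also have "\<dots> = 1" using n2 by simp
  finally show ?thesis .
qed

lemma part2:
  assumes i: "i < m" and j: "j < m"
  shows "conv Dl (conv Dl (chiw (unitv i)) (Gm j)) (chiw (neg_unitv n i))
       = (\<lambda>x. (qq powi c j i * q powi (- c j i)) * Gm j x)"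
proof -
  define ci where "ci = chiw (unitv i)"
  define cj where "cj = chiw (unitv j)"
  define cn where "cn = chiw (neg_unitv n i)"
  define F where "F = conv Dl ci (Gm j)"
  define lam where "lam = qq powi c j i * q powi (- c j i)"
  have ui: "unitv i \<in> idx m n" and uj: "unitv j \<in> idx m n" and ni: "neg_unitv n i \<in> idx m n"
    using i j by (auto simp: unitv_idx negu_idx)
  have cI: "chr ci" and cJ: "chr cj" and cN: "chr cn"
    using ui uj ni by (auto simp: ci_def cj_def cn_def chr_chiw)
  have cE: "chr eps" by (rule chr_eps)
  have dG: "der cj eps (Gm j)" using der_Gm[OF j] by (simp add: cj_def)
  have dF: "der (conv Dl ci cj) (conv Dl ci eps) F"
    unfolding F_def by (rule der_conv_l[OF cI cJ cE dG])
  have dL: "der (conv Dl (conv Dl ci cj) cn) (conv Dl (conv Dl ci eps) cn) (conv Dl F cn)"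
    by (rule der_conv_r[OF cN chr_conv[OF cI cJ] chr_conv[OF cI cE] dF])
  have ci_e: "\<And>k. k < m \<Longrightarrow> ci (e k) = 0" using chi_e ui by (simp add: ci_def)
  have cj_e: "\<And>k. k < m \<Longrightarrow> cj (e k) = 0" using chi_e uj by (simp add: cj_def)
  have cn_e: "\<And>k. k < m \<Longrightarrow> cn (e k) = 0" using chi_e ni by (simp add: cn_def)
  have e1: "conv Dl (conv Dl ci cj) cn = cj"
  proof (rule chr_eq[OF chr_conv[OF chr_conv[OF cI cJ] cN] cJ])
    fix k assume k: "k < m"
    show "conv Dl (conv Dl ci cj) cn (h k) = cj (h k)"
      using k cI cJ cN uin[of i k] ui uj ni
      by (simp add: conv_h chr_lin conv_lin ci_def cj_def cn_def chi_h algebra_simps)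
    show "conv Dl (conv Dl ci cj) cn (e k) = cj (e k)"
      using k by (simp add: conv_e0 chr_conv cI cJ cN ci_e cj_e cn_e)
  qed
  have e2: "conv Dl (conv Dl ci eps) cn = eps"
  proof (rule chr_eq[OF chr_conv[OF chr_conv[OF cI cE] cN] cE])
    fix k assume k: "k < m"
    show "conv Dl (conv Dl ci eps) cn (h k) = eps (h k)"
      using k cI cE cN uin[of i k] ui ni eps_h
      by (simp add: conv_h chr_lin conv_lin ci_def cn_def chi_h algebra_simps)
    show "conv Dl (conv Dl ci eps) cn (e k) = eps (e k)"
      using k eps_e by (simp add: conv_e0 chr_conv cI cE cN ci_e cn_e)
  qed
  have dL': "der cj eps (conv Dl F cn)" using dL e1 e2 by simp
  have dR: "der cj eps (\<lambda>x. lam * Gm j x)"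
    using dG by (auto simp: der_def lin_Gm lin_fun_add lin_fun_scale algebra_simps intro!: lin_funI)
  have F1: "F 1 = 0" using der_one[OF dF] chr_conv[OF cI cJ] chr_conv[OF cI cE] by (simp add: chr_def)
  have lF: "lin_fun scale F" using dF by (simp add: der_def)
  have Fh: "\<And>k. k < m \<Longrightarrow> F (h k) = 0"
    using cI by (simp add: F_def conv_h chr_lin lin_Gm gam_h j)
  have Fe: "F (e k) = (if k = j then 1 else 0)" if k: "k < m" for k
  proof -
    have "F (e k) = ci 1 * Gm j ((\<Sum>t\<in>{1..n-1}. one k t) * e k) + ci (H_inv m n c h k) * Gm j (one k 0 * e k)"
      using cI k ci_e by (simp add: F_def conv_e chr_lin lin_Gm)
    also have "\<dots> = (\<Sum>t\<in>{1..n-1}. cj (one k t)) * (if k = j then 1 else 0)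
        + ci (H_inv m n c h k) * (cj (one k 0) * (if k = j then 1 else 0))"
      using cI j k by (simp add: gam_ye chr_def cj_def lin_fun_sum[OF lin_chiw])
    also have "\<dots> = (if k = j then 1 else 0)"
    proof (cases "k = j")
      case True
      have "(\<Sum>t\<in>{1..n-1}. cj (one k t)) = 1"
        using True j uj sum_ind by (simp add: cj_def chi_oneik unitv_def)
      moreover have "cj (one k 0) = 0"
        using True j uj n2 by (simp add: cj_def chi_oneik unitv_def)
      ultimately show ?thesis using True by simp
    qed simp
    finally show ?thesis .
  qed
  have cnb: "cn (b_inv scale m n q c h j) = lam"
  proof -
    have "cn (b_inv scale m n q c h j) = (\<Prod>l<m. q powi (c j l * int (neg_unitv n i l)))"
      using ni by (simp add: cn_def chi_binv)
    also have "\<dots> = (\<Prod>l<m. if l = i then q powi (c j i * (int n - 1)) else 1)"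
      using n2 by (intro prod.cong) (auto simp: neg_unitv_def of_nat_diff)
    also have "\<dots> = q powi (c j i * (int n - 1))" using i by simp
    also have "\<dots> = q powi (int n * c j i + (- c j i))" by (simp add: algebra_simps)
    also have "\<dots> = q powi (int n * c j i) * q powi (- c j i)"
      by (rule power_int_add) (simp add: q_nz)
    also have "\<dots> = lam" by (simp add: lam_def power_int_power)
    finally show ?thesis .
  qed
  have "conv Dl F cn = (\<lambda>x. lam * Gm j x)"
  proof (rule der_eq[OF dL' dR])
    show "cj 1 = 1" using cJ by (simp add: chr_def)
    show "eps 1 = 1" by (rule eps_one)
    fix k assume k: "k < m"
    show "conv Dl F cn (h k) = lam * Gm j (h k)"
      using k cN lF by (simp add: conv_h chr_lin Fh gam_h j)
    show "conv Dl F cn (e k) = lam * Gm j (e k)"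
      using k cN lF j by (simp add: conv_e chr_lin Fe F1 chr_e0 cn_e cnb gam_e)
  qed
  then show ?thesis by (simp add: F_def ci_def cn_def lam_def)
qed

lemma part1: "j < m \<Longrightarrow> Gm j (x * y) = chiw (unitv j) x * Gm j y + Gm j x * eps y"
  using der_Gm by (simp add: der_def)

end

theorem lemma3p1:
  fixes scale :: "'k::field_char_0 \<Rightarrow> 'a::ring_1 \<Rightarrow> 'a"
    and m n :: nat and q :: 'k
    and a :: "nat \<Rightarrow> nat \<Rightarrow> int" and d :: "nat \<Rightarrow> int"
    and h e :: "nat \<Rightarrow> 'a"
    and G :: "nat \<Rightarrow> 'a set" and B :: "'a set"
    and Dl :: "'a \<Rightarrow> ('a \<times> 'a) list" and eps :: "'a \<Rightarrow> 'k"
  defines "c \<equiv> (\<lambda>i j. d i * a i j)"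
    and "qq \<equiv> q ^ n"
    and "Chi \<equiv> (\<lambda>i. dual_basis scale B (one_a scale m n q h (unitv i)))"
    and "Chi_inv \<equiv> (\<lambda>i. dual_basis scale B (one_a scale m n q h (neg_unitv n i)))"
    and "Gam \<equiv> (\<lambda>j. dual_basis scale B (one_a scale m n q h (unitv j) * e j))"
  assumes alg_closed: "alg_closed TYPE('k)"
    and cartan: "cartan_finite_type m a d"
    and n2: "n \<ge> 2"
    and q_prim: "primitive_root (n ^ 2) q"
    and kalg: "kalgebra scale"
    and gen: "\<forall>x. x \<in> gen_alg scale m h e"
    and h_comm: "\<forall>i<m. \<forall>j<m. h i * h j = h j * h i"
    and h_pow: "\<forall>i<m. h i ^ n = 1"
    and h_e: "\<forall>i<m. \<forall>j<m. h i * e j = scale (if i = j then qq else 1) (e j * h i)"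
    and e_nil: "\<forall>i<m. e i ^ ord_k (q ^ nat (c i i)) = 0"
    and grading: "graded scale G"
    and h_deg: "\<forall>i<m. h i \<in> G 0"
    and e_deg: "\<forall>i<m. e i \<in> G 1"
    and B_indep: "\<not> module.dependent scale B"
    and B_span: "module.span scale B = UNIV"
    and B_hom: "\<forall>b\<in>B. \<exists>k. b \<in> G k"
    and B_ones: "\<forall>x\<in>idx m n. one_a scale m n q h x \<in> B"
    and B_ones_e: "\<forall>x\<in>idx m n. \<forall>i<m. one_a scale m n q h x * e i \<in> B"
    and coprod: "Aq_coproduct scale m n q c h e Dl"
    and eps_lin: "lin_fun scale eps"
    and eps_mult: "\<forall>x y. eps (x * y) = eps x * eps y"
    and eps_one: "eps 1 = 1"
    and eps_h: "\<forall>i<m. eps (h i) = 1"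
    and eps_e: "\<forall>i<m. eps (e i) = 0"
  shows "\<forall>i<m. \<forall>j<m.
           dual_coprod (Gam j) = (\<lambda>p. ftensor (Chi j) (Gam j) p + ftensor (Gam j) eps p)
         \<and> conv Dl (conv Dl (Chi i) (Gam j)) (Chi_inv i)
             = (\<lambda>x. (qq powi (c j i) * q powi (- c j i)) * Gam j x)"
proof (cases "m = 0")
  case True then show ?thesis by simp
next
  case False
  interpret L: LQ n q scale m c h e G B Dl eps
    using False n2 q_prim kalg gen h_comm h_pow h_e grading h_deg e_deg B_indep B_span B_hom
      B_ones B_ones_e coprod eps_lin eps_mult eps_one eps_h eps_e
    by unfold_locales (simp_all add: qq_def)
  have Gm: "Gam = L.Gm" unfolding Gam_def L.Gm_def[abs_def] dual_basis_def by simp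
  have Ch: "Chi = (\<lambda>j. L.chiw (unitv j))" unfolding Chi_def L.chiw_def[abs_def] dual_basis_def by simp
  have Ci: "Chi_inv = (\<lambda>i. L.chiw (neg_unitv n i))" unfolding Chi_inv_def L.chiw_def[abs_def] dual_basis_def by simp
  show ?thesis
  proof (intro allI impI conjI)
    fix i j assume i: "i < m" and j: "j < m"
    show "dual_coprod (Gam j) = (\<lambda>p. ftensor (Chi j) (Gam j) p + ftensor (Gam j) eps p)"
      using L.part1[OF j] by (auto simp: Gm Ch dual_coprod_def ftensor_def)
    show "conv Dl (conv Dl (Chi i) (Gam j)) (Chi_inv i) = (\<lambda>x. (qq powi c j i * q powi (- c j i)) * Gam j x)"
      using L.part2[OF i j] by (simp add: Gm Ch Ci qq_def)
  qed
qed

end
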